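(* Let $K\ge 3$, $d_2,\dots,d_K\ge 2$ and $d_1=d_2\cdots d_K-1$. Then there is a bijection between the set of SLOCC equivalence classes of SLOCC maximal states in $\mathbb{C}^{d_1}\otimes\mathbb{C}^{d_2}\otimes\cdots\otimes\mathbb{C}^{d_K}$ and the set of SLOCC equivalence classes of nonzero states in $\mathbb{C}^{d_2}\otimes\cdots\otimes\mathbb{C}^{d_K}$. Explicitly, a maximal state $|\Phi\rangle=\sum_{i=1}^{d_1}|i\rangle|\phi_i\rangle$ (with $\{|i\rangle\}$ a basis of $\mathbb{C}^{d_1}$) is sent to the class of a nonzero vector spanning the one-dimensional space $\mathrm{span}\{|\phi_i\rangle\}^\perp\subset\mathbb{C}^{d_2}\otimes\cdots\otimes\mathbb{C}^{d_K}$.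
   Context: For a multipartite space $\mathbb{C}^{e_1}\otimes\cdots\otimes\mathbb{C}^{e_m}$ with parties the tensor factors, $|\psi\rangle\le_{\mathrm{SLOCC}}|\phi\rangle$ means $(L_1\otimes\cdots\otimes L_m)|\phi\rangle=|\psi\rangle$ for some linear operators $L_i$ on $\mathbb{C}^{e_i}$; two states are SLOCC equivalent if each is $\le_{\mathrm{SLOCC}}$ the other (equivalently, related by $L_1\otimes\cdots\otimes L_m$ with all $L_i$ invertible). A state $|\phi\rangle$ is SLOCC maximal if for every $|\psi\rangle$ in the space, $|\phi\rangle\le_{\mathrm{SLOCC}}|\psi\rangle$ implies $|\psi\rangle\le_{\mathrm{SLOCC}}|\phi\rangle$; maximal states are exactly those whose reduced density operators on every single factor have full rank, so in particular the $|\phi_i\rangle$ above are linearly independent. *)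

theory Defs
  imports Complex_Main
begin

text \<open>A state in C^{e_1} (x) ... (x) C^{e_m}, with dimension list ds = [e_1,...,e_m],
  is a function from index lists to complex coefficients, vanishing outside the index box.\<close>

type_synonym tensor = "nat list \<Rightarrow> complex"

definition idx :: "nat list \<Rightarrow> nat list set" where
  "idx ds = {is. length is = length ds \<and> (\<forall>j<length ds. is ! j < ds ! j)}"

definition states :: "nat list \<Rightarrow> tensor set" where
  "states ds = {\<psi>. \<forall>is. is \<notin> idx ds \<longrightarrow> \<psi> is = 0}"

text \<open>Apply the local operator L_1 (x) ... (x) L_m (each L_j given by its matrix entries).\<close>
definition loc_apply :: "(nat \<Rightarrow> nat \<Rightarrow> complex) list \<Rightarrow> nat list \<Rightarrow> tensor \<Rightarrow> tensor" where
  "loc_apply Ls ds \<phi> = (\<lambda>is. if is \<in> idx ds then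
      (\<Sum>js\<in>idx ds. (\<Prod>j<length ds. (Ls ! j) (is ! j) (js ! j)) * \<phi> js) else 0)"

definition slocc_le :: "nat list \<Rightarrow> tensor \<Rightarrow> tensor \<Rightarrow> bool" where
  "slocc_le ds \<psi> \<phi> \<longleftrightarrow> (\<exists>Ls. length Ls = length ds \<and> loc_apply Ls ds \<phi> = \<psi>)"

definition slocc_equiv :: "nat list \<Rightarrow> tensor \<Rightarrow> tensor \<Rightarrow> bool" where
  "slocc_equiv ds \<psi> \<phi> \<longleftrightarrow> slocc_le ds \<psi> \<phi> \<and> slocc_le ds \<phi> \<psi>"

definition slocc_maximal :: "nat list \<Rightarrow> tensor \<Rightarrow> bool" where
  "slocc_maximal ds \<phi> \<longleftrightarrow> \<phi> \<in> states ds \<and>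
     (\<forall>\<psi>\<in>states ds. slocc_le ds \<phi> \<psi> \<longrightarrow> slocc_le ds \<psi> \<phi>)"

definition slocc_class :: "nat list \<Rightarrow> tensor \<Rightarrow> tensor set" where
  "slocc_class ds \<phi> = {\<psi>\<in>states ds. slocc_equiv ds \<psi> \<phi>}"

end

theory Submission
  imports Defs "HOL-Library.Function_Algebras"
begin

definition scl :: "complex \<Rightarrow> ('a \<Rightarrow> complex) \<Rightarrow> 'a \<Rightarrow> complex" where
 "scl c f = (\<lambda>x. c * f x)"

global_interpretation VS: vector_space "scl :: complex \<Rightarrow> ('a \<Rightarrow> complex) \<Rightarrow> 'a \<Rightarrow> complex"
  by unfold_locales (auto simp: scl_def fun_eq_iff algebra_simps)

global_interpretation VP: vector_space_pair "scl :: complex \<Rightarrow> ('a \<Rightarrow> complex) \<Rightarrow> 'a \<Rightarrow> complex"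
   "scl :: complex \<Rightarrow> ('b \<Rightarrow> complex) \<Rightarrow> 'b \<Rightarrow> complex"
  by unfold_locales

lemma scl_apply[simp]: "scl c f x = c * f x" by (simp add: scl_def)

lemma sum_fun_apply: "(\<Sum>i\<in>S. f i) x = (\<Sum>i\<in>S. f i x)"
  by (induction S rule: infinite_finite_induct) auto

definition supp :: "'a set \<Rightarrow> ('a \<Rightarrow> complex) set" where
  "supp I = {x. \<forall>i. i \<notin> I \<longrightarrow> x i = 0}"

definition ipr :: "'a set \<Rightarrow> ('a \<Rightarrow> complex) \<Rightarrow> ('a \<Rightarrow> complex) \<Rightarrow> complex" where
  "ipr I x y = (\<Sum>i\<in>I. cnj (x i) * y i)"

definition ev :: "'a \<Rightarrow> 'a \<Rightarrow> complex" where
  "ev i = (\<lambda>j. if j = i then 1 else 0)"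

lemma subspace_supp: "VS.subspace (supp I)"
  by (auto simp: VS.subspace_def supp_def)

lemma supp_add: "x \<in> supp I \<Longrightarrow> y \<in> supp I \<Longrightarrow> x + y \<in> supp I"
  by (auto simp: supp_def)
lemma supp_diff: "x \<in> supp I \<Longrightarrow> y \<in> supp I \<Longrightarrow> x - y \<in> supp I"
  by (auto simp: supp_def)
lemma supp_scl: "x \<in> supp I \<Longrightarrow> scl c x \<in> supp I"
  by (auto simp: supp_def)
lemma supp_zero[simp]: "0 \<in> supp I"
  by (auto simp: supp_def)

lemma ev_in: "i \<in> I \<Longrightarrow> ev i \<in> supp I"
  by (auto simp: supp_def ev_def)

lemma span_supp: "VS.span (supp I) = supp I"
  using subspace_supp VS.span_eq_iff by blast

lemma span_sub_supp: "S \<subseteq> supp I \<Longrightarrow> VS.span S \<subseteq> supp I"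
  using subspace_supp VS.span_minimal by blast

lemma supp_ev_sum: assumes "finite I" "x \<in> supp I"
  shows "x = (\<Sum>i\<in>I. scl (x i) (ev i))"
proof
  fix j
  show "x j = (\<Sum>i\<in>I. scl (x i) (ev i)) j"
  proof -
    have "(\<Sum>i\<in>I. scl (x i) (ev i)) j = (\<Sum>i\<in>I. if i = j then x i else 0)"
      by (auto simp: sum_fun_apply ev_def intro!: sum.cong)
    also have "\<dots> = x j" using assms by (simp add: supp_def)
    finally show ?thesis by simp
  qed
qed

lemma supp_span_ev: assumes "finite I" shows "supp I = VS.span (ev ` I)"
proof
  show "supp I \<subseteq> VS.span (ev ` I)"
  proof
    fix x assume x: "x \<in> supp I"
    show "x \<in> VS.span (ev ` I)"
      by (subst supp_ev_sum[OF assms x]) (intro VS.span_sum VS.span_scale VS.span_base, auto)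
  qed
  show "VS.span (ev ` I) \<subseteq> supp I"
    by (rule span_sub_supp) (auto intro: ev_in)
qed

lemma inj_ev: "inj ev"
  by (rule injI) (metis ev_def one_neq_zero)

lemma indep_ev: "VS.independent (ev ` I)"
proof -
  have "\<not> ev i \<in> VS.span (ev ` I - {ev i})" for i
  proof
    assume a: "ev i \<in> VS.span (ev ` I - {ev i})"
    have "x \<in> VS.span (ev ` I - {ev i}) \<Longrightarrow> x i = 0" for x
    proof (induction rule: VS.span_induct)
      case (step x)
      then show ?case by (auto simp: ev_def)
    next
      case base
      show ?case by (auto simp: VS.subspace_def)
    qed
    from this[OF a] have "ev i i = 0" .
    then show False by (simp add: ev_def)
  qed
  then show ?thesis unfolding VS.dependent_def by blast
qed

lemma card_ev: "card (ev ` I) = card I"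
  using card_image[OF inj_on_subset[OF inj_ev subset_UNIV]] .

lemma bound_supp: assumes "finite I" "X \<subseteq> supp I" "VS.independent X"
  shows "finite X \<and> card X \<le> card I"
proof -
  have "X \<subseteq> VS.span (ev ` I)" using assms supp_span_ev by blast
  from VS.independent_span_bound[OF finite_imageI[OF assms(1)] assms(3) this]
  show ?thesis using card_ev[of I] by simp
qed

lemma ext_span: assumes "finite Y" "X \<subseteq> VS.span Y" "VS.independent X" "card Y \<le> card X"
  shows "Y \<subseteq> VS.span X"
proof
  fix y assume y: "y \<in> Y"
  show "y \<in> VS.span X"
  proof (rule ccontr)
    assume n: "y \<notin> VS.span X"
    have fX: "finite X" using VS.independent_span_bound assms by blast
    have "VS.independent (insert y X)" using n assms VS.independent_insertI by blast
    moreover have "insert y X \<subseteq> VS.span Y" using assms y VS.span_base by blast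
    ultimately have "card (insert y X) \<le> card Y" using VS.independent_span_bound assms by blast
    moreover have "y \<notin> X" using n VS.span_base by blast
    then have "card (insert y X) = Suc (card X)" using fX by simp
    ultimately show False using assms by simp
  qed
qed

lemma indep_of_span: assumes "finite C" "X \<subseteq> VS.span C" "VS.independent X" "card C \<le> card X"
  shows "VS.independent C"
proof -
  obtain b where b: "b \<subseteq> C" "VS.independent b" "C \<subseteq> VS.span b"
    using VS.maximal_independent_subset by blast
  have "VS.span C \<subseteq> VS.span b" using b(3) VS.span_minimal VS.subspace_span by blast
  then have "X \<subseteq> VS.span b" using assms(2) by blast
  moreover have fb: "finite b" using assms(1) b(1) finite_subset by blast
  ultimately have "card X \<le> card b" using VS.independent_span_bound[OF fb assms(3)] by simp
  then have "card b = card C" using card_mono[OF assms(1) b(1)] assms by linarith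
  then have "b = C" using card_subset_eq assms(1) b(1) by blast
  then show ?thesis using b by simp
qed

lemma ipr_add_right: "ipr I x (y + z) = ipr I x y + ipr I x z"
  by (simp add: ipr_def algebra_simps sum.distrib)
lemma ipr_diff_right: "ipr I x (y - z) = ipr I x y - ipr I x z"
  by (simp add: ipr_def algebra_simps sum_subtractf)
lemma ipr_scl_right: "ipr I x (scl c y) = c * ipr I x y"
  by (simp add: ipr_def algebra_simps sum_distrib_left)
lemma ipr_add_left: "ipr I (x + y) z = ipr I x z + ipr I y z"
  by (simp add: ipr_def algebra_simps sum.distrib)
lemma ipr_diff_left: "ipr I (x - y) z = ipr I x z - ipr I y z"
  by (simp add: ipr_def algebra_simps sum_subtractf)
lemma ipr_scl_left: "ipr I (scl c x) y = cnj c * ipr I x y"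
  by (simp add: ipr_def algebra_simps sum_distrib_left)
lemma ipr_zero_left[simp]: "ipr I 0 y = 0" by (simp add: ipr_def)
lemma ipr_zero_right[simp]: "ipr I x 0 = 0" by (simp add: ipr_def)
lemma ipr_cnj: "cnj (ipr I x y) = ipr I y x"
  by (simp add: ipr_def mult.commute)
lemma ipr_sym0: "ipr I x y = 0 \<longleftrightarrow> ipr I y x = 0"
  by (metis complex_cnj_zero_iff ipr_cnj)

lemma ipr_self_0: assumes "finite I" "x \<in> supp I" "ipr I x x = 0" shows "x = 0"
proof -
  have "ipr I x x = (\<Sum>i\<in>I. of_real ((Re (x i))\<^sup>2 + (Im (x i))\<^sup>2))"
    unfolding ipr_def by (rule sum.cong) (simp_all add: mult.commute[of "cnj _"] complex_mult_cnj)
  also have "\<dots> = of_real (\<Sum>i\<in>I. (Re (x i))\<^sup>2 + (Im (x i))\<^sup>2)"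
    by (simp only: of_real_sum)
  finally have s0: "(\<Sum>i\<in>I. (Re (x i))\<^sup>2 + (Im (x i))\<^sup>2) = 0" using assms(3) of_real_eq_0_iff by metis
  have nn: "\<And>i. i \<in> I \<Longrightarrow> 0 \<le> (Re (x i))\<^sup>2 + (Im (x i))\<^sup>2" by simp
  have "\<forall>i\<in>I. (Re (x i))\<^sup>2 + (Im (x i))\<^sup>2 = 0"
    using iffD1[OF sum_nonneg_eq_0_iff[OF assms(1) nn] s0] by simp
  then have "\<forall>i\<in>I. x i = 0"
    by (simp add: complex_eq_iff add_nonneg_eq_0_iff)
  then show ?thesis using assms(2) by (auto simp: supp_def fun_eq_iff)
qed

lemma ipr_span: assumes "\<forall>s\<in>S. ipr I s y = 0" "x \<in> VS.span S" shows "ipr I x y = 0"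
  using assms(2)
proof (induction rule: VS.span_induct)
  case (step x) then show ?case using assms(1) by auto
next
  case base
  show ?case
    by (auto simp: VS.subspace_def ipr_add_left ipr_scl_left)
qed

lemma span_repr: assumes "x \<in> VS.span (f ` K)" "finite K"
  shows "\<exists>a. x = (\<Sum>i\<in>K. scl (a i) (f i))"
  using assms(1)
proof (induction rule: VS.span_induct)
  case (step x)
  then obtain k where k: "k \<in> K" "x = f k" by auto
  have "(\<Sum>i\<in>K. scl (if i = k then 1 else 0) (f i)) = (\<Sum>i\<in>K. if i = k then f i else 0)"
    by (intro sum.cong) (auto simp: scl_def zero_fun_def)
  also have "\<dots> = x" using k assms(2) by simp
  finally have "x = (\<Sum>i\<in>K. scl (if i = k then 1 else 0) (f i))" by simp
  then show ?case by (rule exI[of _ "\<lambda>i. if i = k then 1 else 0"])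
next
  case base
  show ?case
  proof (unfold VS.subspace_def, safe)
    show "\<exists>a. 0 = (\<Sum>i\<in>K. scl (a i) (f i))"
      by (rule exI[of _ "\<lambda>_. 0"]) (simp add: scl_def fun_eq_iff sum_fun_apply zero_fun_def)
    fix a b
    show "\<exists>c. (\<Sum>i\<in>K. scl (a i) (f i)) + (\<Sum>i\<in>K. scl (b i) (f i)) = (\<Sum>i\<in>K. scl (c i) (f i))"
      by (rule exI[of _ "\<lambda>i. a i + b i"]) (simp add: fun_eq_iff sum_fun_apply sum.distrib algebra_simps)
    fix c
    show "\<exists>b. scl c (\<Sum>i\<in>K. scl (a i) (f i)) = (\<Sum>i\<in>K. scl (b i) (f i))"
      by (rule exI[of _ "\<lambda>i. c * a i"]) (simp add: fun_eq_iff sum_fun_apply sum_distrib_left algebra_simps)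
  qed
qed

lemma vs_linearI:
  assumes "\<And>x y. f (x + y) = f x + f y" "\<And>c x. f (scl c x) = scl c (f x)"
  shows "Vector_Spaces.linear (scl :: complex \<Rightarrow> ('a \<Rightarrow> complex) \<Rightarrow> 'a \<Rightarrow> complex)
           (scl :: complex \<Rightarrow> ('b \<Rightarrow> complex) \<Rightarrow> 'b \<Rightarrow> complex) f"
  by (simp add: Vector_Spaces.linear_iff assms VS.vector_space_axioms)

section \<open>Matrices\<close>

definition IdM :: "nat \<Rightarrow> nat \<Rightarrow> complex" where
  "IdM a b = (if a = b then 1 else 0)"

definition mm :: "nat \<Rightarrow> (nat \<Rightarrow> nat \<Rightarrow> complex) \<Rightarrow> (nat \<Rightarrow> nat \<Rightarrow> complex) \<Rightarrow> nat \<Rightarrow> nat \<Rightarrow> complex" where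
  "mm d L M = (\<lambda>a b. \<Sum>c<d. L a c * M c b)"

definition mv :: "nat \<Rightarrow> (nat \<Rightarrow> nat \<Rightarrow> complex) \<Rightarrow> (nat \<Rightarrow> complex) \<Rightarrow> nat \<Rightarrow> complex" where
  "mv d M x = (\<lambda>a. if a < d then \<Sum>b<d. M a b * x b else 0)"

definition adjM :: "(nat \<Rightarrow> nat \<Rightarrow> complex) \<Rightarrow> nat \<Rightarrow> nat \<Rightarrow> complex" where
  "adjM L = (\<lambda>a b. cnj (L b a))"

lemma adjM_adjM[simp]: "adjM (adjM L) = L" by (simp add: adjM_def)

lemma if10_mult: "(if P then 1 else 0) * (y::complex) = (if P then y else 0)" by simp
lemma mult_if10: "(y::complex) * (if P then 1 else 0) = (if P then y else 0)" by simp

lemma mm_IdM_left: "a < d \<Longrightarrow> mm d IdM M a b = M a b"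
  by (simp add: mm_def IdM_def if10_mult)

lemma mm_IdM_right: "b < d \<Longrightarrow> mm d M IdM a b = M a b"
  by (simp add: mm_def IdM_def mult_if10)

lemma mm_adjM: "mm d (adjM N) (adjM R) a b = cnj (mm d R N b a)"
  by (simp add: mm_def adjM_def mult.commute)

lemma IdM_cnj: "cnj (IdM b a) = IdM a b" by (simp add: IdM_def)

lemma mv_supp: "mv d M x \<in> supp {..<d}"
  by (simp add: mv_def supp_def)

lemma mv_linear: "Vector_Spaces.linear scl scl (mv d M)"
  by (rule vs_linearI) (auto simp: mv_def fun_eq_iff algebra_simps sum.distrib sum_distrib_left)

lemma mv_add: "mv d M (x + y) = mv d M x + mv d M y"
  by (auto simp: mv_def fun_eq_iff algebra_simps sum.distrib)

lemma mv_scl: "mv d M (scl c x) = scl c (mv d M x)"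
  by (auto simp: mv_def fun_eq_iff algebra_simps sum_distrib_left)

lemma mv_mm: "mv d (mm d M N) x = mv d M (mv d N x)"
proof
  fix a
  show "mv d (mm d M N) x a = mv d M (mv d N x) a"
  proof (cases "a < d")
    case True
    have "(\<Sum>b<d. (\<Sum>c<d. M a c * N c b) * x b) = (\<Sum>c<d. M a c * (\<Sum>b<d. N c b * x b))"
      by (simp add: sum_distrib_left sum_distrib_right mult.assoc) (rule sum.swap)
    then show ?thesis using True by (simp add: mv_def mm_def cong: if_cong)
  qed (simp add: mv_def)
qed

lemma mv_IdM: "x \<in> supp {..<d} \<Longrightarrow> mv d IdM x = x"
  by (auto simp: mv_def IdM_def supp_def fun_eq_iff if10_mult)

lemma mv_ev: "b < d \<Longrightarrow> mv d M (ev b) = (\<lambda>a. if a < d then M a b else 0)"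
  by (auto simp: mv_def ev_def fun_eq_iff mult_if10)

lemma mv_cong: "(\<And>a b. a < d \<Longrightarrow> b < d \<Longrightarrow> M a b = N a b) \<Longrightarrow> mv d M = mv d N"
  by (auto simp: mv_def fun_eq_iff intro!: sum.cong)

lemma mv_sum_ev: "x \<in> supp {..<d} \<Longrightarrow> mv d M x = (\<Sum>b<d. scl (x b) (mv d M (ev b)))"
proof -
  assume x: "x \<in> supp {..<d}"
  have "x = (\<Sum>b<d. scl (x b) (ev b))" using supp_ev_sum[OF _ x] by simp
  then have "mv d M x = mv d M (\<Sum>b<d. scl (x b) (ev b))" by simp
  also have "\<dots> = (\<Sum>b<d. mv d M (scl (x b) (ev b)))"
    by (rule VP.linear_sum[OF mv_linear])
  also have "\<dots> = (\<Sum>b<d. scl (x b) (mv d M (ev b)))"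
    by (simp add: mv_scl)
  finally show ?thesis .
qed

lemma mat_inverse:
  assumes surj: "\<And>e. e \<in> supp {..<d} \<Longrightarrow> \<exists>x\<in>supp {..<d}. mv d M x = e"
  shows "\<exists>R. \<forall>a<d. \<forall>b<d. mm d M R a b = IdM a b \<and> mm d R M a b = IdM a b"
proof -
  have ex: "\<exists>x. b < d \<longrightarrow> x \<in> supp {..<d} \<and> mv d M x = ev b" for b
  proof (cases "b < d")
    case True
    then have "ev b \<in> supp {..<d}" by (simp add: ev_in)
    from surj[OF this] obtain x where "x \<in> supp {..<d}" "mv d M x = ev b" by blast
    then show ?thesis by blast
  qed simp
  have "\<forall>b. \<exists>x. b < d \<longrightarrow> x \<in> supp {..<d} \<and> mv d M x = ev b" using ex by blast
  then have "\<exists>X. \<forall>b. b < d \<longrightarrow> X b \<in> supp {..<d} \<and> mv d M (X b) = ev b" by (rule choice)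
  then obtain X where X0: "\<forall>b. b < d \<longrightarrow> X b \<in> supp {..<d} \<and> mv d M (X b) = ev b"
    by blast
  then have X: "\<And>b. b < d \<Longrightarrow> X b \<in> supp {..<d} \<and> mv d M (X b) = ev b" by blast
  define R where "R = (\<lambda>a b. X b a)"
  have MR: "mm d M R a b = IdM a b" if "a < d" "b < d" for a b
  proof -
    have "mm d M R a b = mv d M (X b) a" using that by (simp add: mm_def mv_def R_def)
    also have "\<dots> = IdM a b" using X[OF that(2)] by (simp add: ev_def IdM_def)
    finally show ?thesis .
  qed
  define C where "C = (\<lambda>b. mv d M (ev b)) ` {..<d}"
  have Csupp: "C \<subseteq> supp {..<d}" using mv_supp C_def by blast
  have spanC: "supp {..<d} \<subseteq> VS.span C"
  proof
    fix e assume e: "e \<in> supp {..<d}"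
    then obtain x where x: "x \<in> supp {..<d}" "mv d M x = e" using surj by blast
    show "e \<in> VS.span C"
      unfolding x(2)[symmetric] mv_sum_ev[OF x(1)] C_def
      by (intro VS.span_sum VS.span_scale VS.span_base) auto
  qed
  have evC: "ev ` {..<d} \<subseteq> VS.span C"
    by (rule image_subsetI) (rule subsetD[OF spanC ev_in], simp)
  have fC: "finite C" using C_def by simp
  have cev: "card (ev ` {..<d}) = d" using card_ev[of "{..<d}"] by simp
  have C2: "C = mv d M ` (ev ` {..<d})" unfolding C_def by (simp add: image_image)
  have "card C \<le> d" unfolding C_def using card_image_le[of "{..<d}"] by simp
  then have indC: "VS.independent C" using indep_of_span[OF fC evC indep_ev] cev by simp
  have "d \<le> card C" using VS.independent_span_bound[OF fC indep_ev evC] cev by simp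
  then have "card (mv d M ` (ev ` {..<d})) = card (ev ` {..<d})" using cev \<open>card C \<le> d\<close> C2 by simp
  then have injC: "inj_on (mv d M) (ev ` {..<d})"
    by (rule eq_card_imp_inj_on[rotated]) simp
  have indC': "VS.independent (mv d M ` (ev ` {..<d}))" using indC C2 by simp
  have inj: "inj_on (mv d M) (VS.span (ev ` {..<d}))"
    using VP.linear_inj_on_span_iff_independent_image[OF mv_linear indC'] injC by simp
  have RM: "mm d R M a b = IdM a b" if "a < d" "b < d" for a b
  proof -
    have xs: "mv d R (mv d M (ev b)) \<in> supp {..<d}" by (rule mv_supp)
    have "mv d M (mv d R (mv d M (ev b))) = mv d (mm d M R) (mv d M (ev b))" by (simp add: mv_mm)
    also have "\<dots> = mv d IdM (mv d M (ev b))" using mv_cong[of d "mm d M R" IdM] MR by simp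
    also have "\<dots> = mv d M (ev b)" by (rule mv_IdM[OF mv_supp])
    finally have "mv d R (mv d M (ev b)) = ev b"
      using inj supp_span_ev[of "{..<d}"] xs ev_in[of b "{..<d}"] that
      unfolding inj_on_def by auto
    then have "mv d (mm d R M) (ev b) a = ev b a" by (simp add: mv_mm)
    then have "mm d R M a b = ev b a" using that by (simp add: mv_ev[OF that(2)])
    then show ?thesis by (simp add: ev_def IdM_def)
  qed
  show ?thesis using MR RM by blast
qed

section \<open>Index sets\<close>

lemma idx_length: "is \<in> idx ds \<Longrightarrow> length is = length ds"
  by (simp add: idx_def)

lemma idx_nth: "is \<in> idx ds \<Longrightarrow> k < length ds \<Longrightarrow> is ! k < ds ! k"
  by (simp add: idx_def)

lemma idx_upd: assumes "is \<in> idx ds" "a < ds ! j" shows "is[j := a] \<in> idx ds"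
  unfolding idx_def
proof (intro CollectI conjI allI impI)
  show "length (is[j := a]) = length ds" using assms by (simp add: idx_def)
  fix k assume k: "k < length ds"
  show "is[j := a] ! k < ds ! k"
  proof (cases "k = j")
    case True
    then show ?thesis using assms k by (simp add: idx_def)
  next
    case False
    then show ?thesis using assms k by (simp add: idx_def)
  qed
qed

lemma idx_Nil: "idx [] = {[]}"
  by (auto simp: idx_def)

lemma idx_Cons_iff: "(i # is) \<in> idx (d # ds) \<longleftrightarrow> i < d \<and> is \<in> idx ds"
proof
  assume "(i # is) \<in> idx (d # ds)"
  then show "i < d \<and> is \<in> idx ds"
    unfolding idx_def by (auto simp: nth_Cons_Suc dest: spec[of _ 0] spec[of _ "Suc _"])
next
  assume "i < d \<and> is \<in> idx ds"
  then show "(i # is) \<in> idx (d # ds)"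
    unfolding idx_def by (auto simp: nth_Cons split: nat.splits)
qed

lemma idx_Nil_notin: "[] \<notin> idx (d # ds)"
  by (simp add: idx_def)

lemma idx_Cons: "idx (d # ds) = (\<lambda>(a, js). a # js) ` ({..<d} \<times> idx ds)"
proof (rule set_eqI)
  fix v show "v \<in> idx (d # ds) \<longleftrightarrow> v \<in> (\<lambda>(a, js). a # js) ` ({..<d} \<times> idx ds)"
    by (cases v) (auto simp: idx_Cons_iff idx_Nil_notin)
qed

lemma inj_Cons2: "inj_on (\<lambda>(a, js). a # js) X"
  by (auto simp: inj_on_def)

lemma finite_idx[simp]: "finite (idx ds)"
  by (induction ds) (auto simp: idx_Nil idx_Cons)

lemma card_idx: "card (idx ds) = prod_list ds"
proof (induction ds)
  case Nil then show ?case by (simp add: idx_Nil)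
next
  case (Cons d ds)
  have "card (idx (d # ds)) = card ({..<d} \<times> idx ds)"
    unfolding idx_Cons by (rule card_image[OF inj_Cons2])
  also have "\<dots> = d * card (idx ds)" by (simp add: card_cartesian_product)
  finally show ?case using Cons by simp
qed

lemma states_supp: "states ds = supp (idx ds)"
  by (simp add: states_def supp_def)

lemma sum_idx_Cons: "(\<Sum>v\<in>idx (d # ds). f v) = (\<Sum>a<d. \<Sum>js\<in>idx ds. f (a # js))"
proof -
  have "(\<Sum>v\<in>idx (d # ds). f v) = (\<Sum>p\<in>{..<d} \<times> idx ds. f (case p of (a, js) \<Rightarrow> a # js))"
    unfolding idx_Cons by (subst sum.reindex[OF inj_Cons2]) (simp add: comp_def)
  also have "(\<lambda>p. f (case p of (a, js) \<Rightarrow> a # js)) = (\<lambda>(a, js). f (a # js))"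
    by (auto simp: fun_eq_iff split: prod.splits)
  also have "(\<Sum>p\<in>{..<d} \<times> idx ds. (\<lambda>(a, js). f (a # js)) p) = (\<Sum>a<d. \<Sum>js\<in>idx ds. f (a # js))"
    by (simp add: sum.cartesian_product)
  finally show ?thesis .
qed

lemma sum_idx_prod:
  fixes f :: "nat \<Rightarrow> nat \<Rightarrow> complex"
  shows "(\<Sum>ks\<in>idx ds. \<Prod>k<length ds. f k (ks ! k)) = (\<Prod>k<length ds. \<Sum>c<ds ! k. f k c)"
proof (induction ds arbitrary: f)
  case Nil then show ?case by (simp add: idx_Nil)
next
  case (Cons d ds)
  have "(\<Sum>ks\<in>idx (d # ds). \<Prod>k<length (d # ds). f k (ks ! k))
      = (\<Sum>a<d. \<Sum>js\<in>idx ds. f 0 a * (\<Prod>k<length ds. f (Suc k) (js ! k)))"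
    by (simp add: sum_idx_Cons prod.lessThan_Suc_shift del: prod.lessThan_Suc)
  also have "\<dots> = (\<Sum>a<d. f 0 a) * (\<Sum>js\<in>idx ds. \<Prod>k<length ds. f (Suc k) (js ! k))"
    by (subst sum_product) (rule refl)
  also have "\<dots> = (\<Sum>a<d. f 0 a) * (\<Prod>k<length ds. \<Sum>c<ds ! k. f (Suc k) c)"
    using Cons[of "\<lambda>k. f (Suc k)"] by simp
  also have "\<dots> = (\<Prod>k<length (d # ds). \<Sum>c<(d # ds) ! k. f k c)"
    by (simp add: prod.lessThan_Suc_shift del: prod.lessThan_Suc)
  finally show ?case .
qed

section \<open>Local operators\<close>

lemma loc_out: "is \<notin> idx ds \<Longrightarrow> loc_apply Ls ds x is = 0"
  by (simp add: loc_apply_def)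

lemma loc_in: "is \<in> idx ds \<Longrightarrow> loc_apply Ls ds x is =
   (\<Sum>js\<in>idx ds. (\<Prod>j<length ds. (Ls ! j) (is ! j) (js ! j)) * x js)"
  by (simp add: loc_apply_def)

lemma loc_states: "loc_apply Ls ds x \<in> states ds"
  by (simp add: states_def loc_out)

lemma loc_cong:
  assumes "\<And>k a b. k < length ds \<Longrightarrow> a < ds ! k \<Longrightarrow> b < ds ! k \<Longrightarrow> (Ls ! k) a b = (Ms ! k) a b"
  shows "loc_apply Ls ds = loc_apply Ms ds"
proof (intro ext)
  fix x "is"
  show "loc_apply Ls ds x is = loc_apply Ms ds x is"
  proof (cases "is \<in> idx ds")
    case True
    show ?thesis unfolding loc_in[OF True]
      by (intro sum.cong prod.cong arg_cong2[where f="(*)"] refl assms)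
         (auto simp: idx_nth True)
  qed (simp add: loc_out)
qed

definition mml :: "nat list \<Rightarrow> (nat \<Rightarrow> nat \<Rightarrow> complex) list \<Rightarrow> (nat \<Rightarrow> nat \<Rightarrow> complex) list \<Rightarrow> (nat \<Rightarrow> nat \<Rightarrow> complex) list" where
  "mml ds Ls Ms = map (\<lambda>k. mm (ds ! k) (Ls ! k) (Ms ! k)) [0..<length ds]"

lemma length_mml[simp]: "length (mml ds Ls Ms) = length ds"
  by (simp add: mml_def)

lemma nth_mml: "k < length ds \<Longrightarrow> mml ds Ls Ms ! k = mm (ds ! k) (Ls ! k) (Ms ! k)"
  by (simp add: mml_def)

lemma loc_comp: "loc_apply Ls ds (loc_apply Ms ds x) = loc_apply (mml ds Ls Ms) ds x"
proof (intro ext)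
  fix "is"
  show "loc_apply Ls ds (loc_apply Ms ds x) is = loc_apply (mml ds Ls Ms) ds x is"
  proof (cases "is \<in> idx ds")
    case True
    have "loc_apply Ls ds (loc_apply Ms ds x) is =
      (\<Sum>ks\<in>idx ds. (\<Prod>j<length ds. (Ls ! j) (is ! j) (ks ! j)) *
         (\<Sum>js\<in>idx ds. (\<Prod>j<length ds. (Ms ! j) (ks ! j) (js ! j)) * x js))"
      unfolding loc_in[OF True] by (intro sum.cong refl) (simp add: loc_in)
    also have "\<dots> = (\<Sum>ks\<in>idx ds. \<Sum>js\<in>idx ds.
         (\<Prod>j<length ds. (Ls ! j) (is ! j) (ks ! j) * (Ms ! j) (ks ! j) (js ! j)) * x js)"
      by (simp add: sum_distrib_left prod.distrib mult.assoc)
    also have "\<dots> = (\<Sum>js\<in>idx ds. (\<Sum>ks\<in>idx ds.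
         (\<Prod>j<length ds. (Ls ! j) (is ! j) (ks ! j) * (Ms ! j) (ks ! j) (js ! j))) * x js)"
      by (subst sum.swap) (simp add: sum_distrib_right)
    also have "\<dots> = (\<Sum>js\<in>idx ds. (\<Prod>j<length ds. \<Sum>c<ds ! j. (Ls ! j) (is ! j) c * (Ms ! j) c (js ! j)) * x js)"
    proof (intro sum.cong refl arg_cong2[where f="(*)"])
      fix js
      show "(\<Sum>ks\<in>idx ds. \<Prod>j<length ds. (Ls ! j) (is ! j) (ks ! j) * (Ms ! j) (ks ! j) (js ! j)) =
         (\<Prod>j<length ds. \<Sum>c<ds ! j. (Ls ! j) (is ! j) c * (Ms ! j) c (js ! j))"
        using sum_idx_prod[where ds=ds and f="\<lambda>j c. (Ls ! j) (is ! j) c * (Ms ! j) c (js ! j)"] by simp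
    qed
    also have "\<dots> = loc_apply (mml ds Ls Ms) ds x is"
      unfolding loc_in[OF True] by (intro sum.cong refl arg_cong2[where f="(*)"] prod.cong) (simp_all add: nth_mml mm_def)
    finally show ?thesis .
  qed (simp add: loc_out)
qed

definition Ids :: "nat \<Rightarrow> (nat \<Rightarrow> nat \<Rightarrow> complex) list" where
  "Ids m = replicate m IdM"

lemma prod_IdM_idx: assumes "is \<in> idx ds" "js \<in> idx ds"
  shows "(\<Prod>j<length ds. IdM (is ! j) (js ! j)) = (if is = js then 1 else 0)"
proof (cases "is = js")
  case True then show ?thesis by (simp add: IdM_def)
next
  case False
  then obtain k where k: "k < length ds" "is ! k \<noteq> js ! k"
    using assms idx_length nth_equalityI by metis
  then have "IdM (is ! k) (js ! k) = 0" by (simp add: IdM_def)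
  then show ?thesis using False k by (metis finite_lessThan lessThan_iff prod_zero_iff)
qed

lemma loc_Ids: assumes "x \<in> states ds" shows "loc_apply (Ids (length ds)) ds x = x"
proof (intro ext)
  fix "is"
  show "loc_apply (Ids (length ds)) ds x is = x is"
  proof (cases "is \<in> idx ds")
    case True
    have "loc_apply (Ids (length ds)) ds x is = (\<Sum>js\<in>idx ds. (if is = js then 1 else 0) * x js)"
      unfolding loc_in[OF True]
      by (intro sum.cong refl) (simp add: Ids_def prod_IdM_idx[OF True] del: mult_if10 if10_mult)
    also have "\<dots> = x is" using True by (simp add: if10_mult)
    finally show ?thesis .
  next
    case False then show ?thesis using assms by (simp add: loc_out states_def)
  qed
qed

lemma length_Ids[simp]: "length (Ids m) = m" by (simp add: Ids_def)
lemma nth_Ids[simp]: "k < m \<Longrightarrow> Ids m ! k = IdM" by (simp add: Ids_def)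

lemma loc_add: "loc_apply Ls ds (x + y) = loc_apply Ls ds x + loc_apply Ls ds y"
  by (auto simp: loc_apply_def fun_eq_iff algebra_simps sum.distrib)

lemma loc_scl: "loc_apply Ls ds (scl c x) = scl c (loc_apply Ls ds x)"
  by (auto simp: loc_apply_def fun_eq_iff algebra_simps sum_distrib_left)

lemma loc_linear: "Vector_Spaces.linear scl scl (loc_apply Ls ds)"
  by (rule vs_linearI) (simp_all add: loc_add loc_scl)

lemma loc_sum: "loc_apply Ls ds (\<Sum>i\<in>K. f i) = (\<Sum>i\<in>K. loc_apply Ls ds (f i))"
  by (rule VP.linear_sum[OF loc_linear])

definition adjs :: "(nat \<Rightarrow> nat \<Rightarrow> complex) list \<Rightarrow> (nat \<Rightarrow> nat \<Rightarrow> complex) list" where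
  "adjs Ls = map adjM Ls"

lemma adjs_adjs[simp]: "adjs (adjs Ls) = Ls" by (simp add: adjs_def comp_def)
lemma length_adjs[simp]: "length (adjs Ls) = length Ls" by (simp add: adjs_def)

lemma loc_adj: assumes "length Ls = length ds"
  shows "ipr (idx ds) y (loc_apply Ls ds x) = ipr (idx ds) (loc_apply (adjs Ls) ds y) x"
proof -
  have "ipr (idx ds) y (loc_apply Ls ds x) =
     (\<Sum>is\<in>idx ds. \<Sum>js\<in>idx ds. cnj (y is) * (\<Prod>j<length ds. (Ls ! j) (is ! j) (js ! j)) * x js)"
    unfolding ipr_def by (intro sum.cong refl) (simp add: loc_in sum_distrib_left mult.assoc)
  also have "\<dots> = (\<Sum>js\<in>idx ds. \<Sum>is\<in>idx ds. cnj (y is) * (\<Prod>j<length ds. (Ls ! j) (is ! j) (js ! j)) * x js)"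
    by (rule sum.swap)
  also have "\<dots> = ipr (idx ds) (loc_apply (adjs Ls) ds y) x"
    unfolding ipr_def
    by (intro sum.cong refl) (simp add: loc_in sum_distrib_right sum_distrib_left adjs_def adjM_def assms mult_ac)
  finally show ?thesis .
qed

lemma loc_scale_first:
  assumes "length Ls = length ds" "0 < length ds"
  shows "loc_apply (Ls[0 := (\<lambda>a b. c * (Ls ! 0) a b)]) ds x = scl c (loc_apply Ls ds x)"
proof (intro ext)
  fix "is"
  show "loc_apply (Ls[0 := (\<lambda>a b. c * (Ls ! 0) a b)]) ds x is = scl c (loc_apply Ls ds x) is"
  proof (cases "is \<in> idx ds")
    case True
    obtain m where m: "length ds = Suc m" using assms(2) by (cases "length ds") auto
    have "\<And>js. (\<Prod>j<length ds. (Ls[0 := (\<lambda>a b. c * (Ls ! 0) a b)] ! j) (is ! j) (js ! j))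
        = c * (\<Prod>j<length ds. (Ls ! j) (is ! j) (js ! j))"
      unfolding m using assms m by (simp add: prod.lessThan_Suc_shift mult.assoc del: prod.lessThan_Suc)
    then show ?thesis unfolding scl_apply loc_in[OF True]
      by (simp add: sum_distrib_left mult.assoc)
  qed (simp add: loc_out)
qed

section \<open>Slices and the first party\<close>

definition sl :: "(nat list \<Rightarrow> complex) \<Rightarrow> nat \<Rightarrow> nat list \<Rightarrow> complex" where
  "sl \<Phi> i = (\<lambda>js. \<Phi> (i # js))"

lemma sl_states: "\<Phi> \<in> states (d # ds) \<Longrightarrow> sl \<Phi> i \<in> states ds"
  by (auto simp: states_def sl_def idx_Cons_iff)

lemma states_eq_sl:
  assumes "\<Phi> \<in> states (d # ds)" "\<Theta> \<in> states (d # ds)" "\<And>i. i < d \<Longrightarrow> sl \<Phi> i = sl \<Theta> i"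
  shows "\<Phi> = \<Theta>"
proof (intro ext)
  fix v show "\<Phi> v = \<Theta> v"
  proof (cases "v \<in> idx (d # ds)")
    case True
    then obtain i js where v: "v = i # js" "i < d" by (cases v) (auto simp: idx_Nil_notin idx_Cons_iff)
    then show ?thesis using assms(3)[of i] by (simp add: sl_def fun_eq_iff)
  next
    case False then show ?thesis using assms by (simp add: states_def)
  qed
qed

lemma sl_loc_Cons:
  assumes "length Ls = length ds" "i < d"
  shows "sl (loc_apply (L # Ls) (d # ds) \<Phi>) i = (\<Sum>a<d. scl (L i a) (loc_apply Ls ds (sl \<Phi> a)))"
proof (intro ext)
  fix js
  show "sl (loc_apply (L # Ls) (d # ds) \<Phi>) i js = (\<Sum>a<d. scl (L i a) (loc_apply Ls ds (sl \<Phi> a))) js"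
  proof (cases "js \<in> idx ds")
    case True
    then have ij: "i # js \<in> idx (d # ds)" using assms by (simp add: idx_Cons_iff)
    show ?thesis
      unfolding sl_def loc_in[OF ij] sum_fun_apply scl_apply loc_in[OF True] sum_idx_Cons
      using assms by (simp add: prod.lessThan_Suc_shift sum_distrib_left mult_ac del: prod.lessThan_Suc)
  next
    case False
    then have "i # js \<notin> idx (d # ds)" by (simp add: idx_Cons_iff)
    then show ?thesis using False by (simp add: sl_def loc_out sum_fun_apply)
  qed
qed

definition mk :: "nat \<Rightarrow> nat list \<Rightarrow> (nat \<Rightarrow> nat list \<Rightarrow> complex) \<Rightarrow> nat list \<Rightarrow> complex" where
  "mk d ds f = (\<lambda>v. case v of [] \<Rightarrow> 0 | i # js \<Rightarrow> if i < d \<and> js \<in> idx ds then f i js else 0)"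

lemma mk_states: "mk d ds f \<in> states (d # ds)"
  by (auto simp: states_def mk_def idx_Cons_iff split: list.splits)

lemma sl_mk: "i < d \<Longrightarrow> f i \<in> states ds \<Longrightarrow> sl (mk d ds f) i = f i"
  by (auto simp: sl_def mk_def fun_eq_iff states_def)

section \<open>Orthogonal complements (generic)\<close>

lemma orth_exists:
  assumes fI: "finite I" and S: "S \<subseteq> supp I" and fS: "finite S" and lt: "card S < card I"
  shows "\<exists>w\<in>supp I. w \<noteq> 0 \<and> (\<forall>s\<in>S. ipr I s w = 0)"
proof (rule ccontr)
  assume no: "\<not> (\<exists>w\<in>supp I. w \<noteq> 0 \<and> (\<forall>s\<in>S. ipr I s w = 0))"
  define g where "g x = (\<lambda>s. if s \<in> S then ipr I s x else 0)" for x
  have lin: "Vector_Spaces.linear scl scl g"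
    by (rule vs_linearI) (auto simp: g_def fun_eq_iff ipr_add_right ipr_scl_right)
  have sp: "VS.span (ev ` I) = supp I" using supp_span_ev[OF fI] by simp
  have "inj_on g (supp I)"
  proof (subst VP.linear_inj_on_iff_eq_0[OF lin subspace_supp], intro ballI impI)
    fix x assume x: "x \<in> supp I" "g x = 0"
    have "\<forall>s\<in>S. ipr I s x = 0"
    proof
      fix s assume s: "s \<in> S"
      from fun_cong[OF x(2), of s] show "ipr I s x = 0" using s by (simp add: g_def)
    qed
    then show "x = 0" using no x by blast
  qed
  then have inj: "inj_on g (VS.span (ev ` I))" using sp by simp
  have ind: "VS.independent (g ` ev ` I)"
    by (rule VP.linear_independent_injective_image[OF lin indep_ev inj])
  have sub: "g ` ev ` I \<subseteq> supp S" by (auto simp: g_def supp_def)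
  have "card (g ` ev ` I) \<le> card S" using bound_supp[OF fS sub ind] by simp
  moreover have "card (g ` ev ` I) = card I"
  proof -
    have "inj_on g (ev ` I)" using inj VS.span_superset inj_on_subset by blast
    then show ?thesis using card_image card_ev by metis
  qed
  ultimately show False using lt by simp
qed

lemma orth_exists2:
  assumes fI: "finite I" and S: "S \<subseteq> supp I" and fS: "finite S" and e: "e \<in> supp I" "e \<notin> VS.span S"
  shows "\<exists>w\<in>supp I. w \<noteq> 0 \<and> (\<forall>s\<in>S. ipr I s w = 0)"
proof -
  obtain b where b: "b \<subseteq> S" "VS.independent b" "S \<subseteq> VS.span b"
    using VS.maximal_independent_subset by blast
  have fb: "finite b" using fS b(1) finite_subset by blast
  have bs: "b \<subseteq> supp I" using b(1) S by blast
  have "card b < card I"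
  proof (rule ccontr)
    assume "\<not> card b < card I"
    then have "card (ev ` I) \<le> card b" using card_ev[of I] by simp
    moreover have "b \<subseteq> VS.span (ev ` I)" using bs supp_span_ev[OF fI] by simp
    ultimately have "ev ` I \<subseteq> VS.span b" using ext_span[OF finite_imageI[OF fI] _ b(2)] by blast
    then have "VS.span (ev ` I) \<subseteq> VS.span b" using VS.span_minimal VS.subspace_span by blast
    also have "\<dots> \<subseteq> VS.span S" using b(1) VS.span_mono by blast
    finally show False using e supp_span_ev[OF fI] by blast
  qed
  from orth_exists[OF fI bs fb this] obtain w where w: "w \<in> supp I" "w \<noteq> 0" "\<forall>s\<in>b. ipr I s w = 0"
    by blast
  have "\<forall>s\<in>S. ipr I s w = 0" using ipr_span[OF w(3)] b(3) by blast
  then show ?thesis using w by blast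
qed

lemma perp2:
  assumes fI: "finite I" and psi: "\<psi> \<in> supp I" "\<psi> \<noteq> 0" and z: "z \<in> supp I"
    and H: "\<And>y. y \<in> supp I \<Longrightarrow> ipr I \<psi> y = 0 \<Longrightarrow> ipr I z y = 0"
  shows "z = scl (ipr I \<psi> z / ipr I \<psi> \<psi>) \<psi>"
proof -
  define c where "c = ipr I \<psi> z / ipr I \<psi> \<psi>"
  have nz: "ipr I \<psi> \<psi> \<noteq> 0" using ipr_self_0[OF fI psi(1)] psi(2) by blast
  define y where "y = z - scl c \<psi>"
  have ys: "y \<in> supp I" unfolding y_def using supp_diff[OF z supp_scl[OF psi(1)]] .
  have "ipr I \<psi> y = 0" unfolding y_def c_def using nz by (simp add: ipr_diff_right ipr_scl_right)
  then have "ipr I z y = 0" using H[OF ys] by simp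
  moreover have "ipr I (z - scl c \<psi>) t = ipr I z t - cnj c * ipr I \<psi> t" for t
    by (simp add: ipr_diff_left ipr_scl_left)
  ultimately have "ipr I y y = 0" using \<open>ipr I \<psi> y = 0\<close> unfolding y_def by simp
  then have "y = 0" using ipr_self_0[OF fI ys] by blast
  then show ?thesis unfolding y_def c_def by simp
qed

section \<open>Single parties\<close>

lemma fib_sum:
  assumes r: "r \<in> idx ds" and j: "j < length ds"
    and f0: "\<And>is. is \<in> idx ds \<Longrightarrow> f is \<noteq> 0 \<Longrightarrow> (\<forall>k<length ds. k \<noteq> j \<longrightarrow> is ! k = r ! k)"
  shows "(\<Sum>is\<in>idx ds. f is) = (\<Sum>a<ds ! j. f (r[j := a]))"
proof -
  let ?T = "(\<lambda>a. r[j := a]) ` {..<ds ! j}"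
  have T: "?T \<subseteq> idx ds" using idx_upd[OF r] by auto
  have lr: "length r = length ds" using r idx_length by blast
  have "(\<Sum>is\<in>idx ds. f is) = (\<Sum>is\<in>?T. f is)"
  proof (rule sum.mono_neutral_right[OF finite_idx T], rule ballI)
    fix "is" assume hi: "is \<in> idx ds - ?T"
    show "f is = 0"
    proof (rule ccontr)
      assume "f is \<noteq> 0"
      then have agree: "\<forall>k<length ds. k \<noteq> j \<longrightarrow> is ! k = r ! k" using f0 hi by blast
      have li: "length is = length ds" using hi idx_length by blast
      have "is = r[j := is ! j]"
        by (rule nth_equalityI) (use li lr agree j in \<open>auto simp: nth_list_update\<close>)
      moreover have "is ! j < ds ! j" using hi j idx_nth by blast
      ultimately have "is \<in> ?T" by blast
      then show False using hi by blast
    qed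
  qed
  also have "\<dots> = (\<Sum>a<ds ! j. f (r[j := a]))"
  proof (rule sum.reindex[unfolded comp_def])
    show "inj_on (\<lambda>a. r[j := a]) {..<ds ! j}"
      by (rule inj_onI) (metis j lr nth_list_update_eq)
  qed
  finally show ?thesis .
qed

lemma loc_sgl:
  assumes hi: "is \<in> idx ds" and j: "j < length ds"
  shows "loc_apply ((Ids (length ds))[j := G]) ds x is = (\<Sum>a<ds ! j. G (is ! j) a * x (is[j := a]))"
proof -
  let ?L = "(Ids (length ds))[j := G]"
  have li: "length is = length ds" using hi idx_length by blast
  have nthL: "?L ! k = (if k = j then G else IdM)" if "k < length ds" for k
    using that j by (simp add: nth_list_update)
  have "loc_apply ?L ds x is = (\<Sum>js\<in>idx ds. (\<Prod>k<length ds. (?L ! k) (is ! k) (js ! k)) * x js)"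
    by (rule loc_in[OF hi])
  also have "\<dots> = (\<Sum>a<ds ! j. (\<Prod>k<length ds. (?L ! k) (is ! k) ((is[j := a]) ! k)) * x (is[j := a]))"
  proof (rule fib_sum[OF hi j])
    fix js assume js: "js \<in> idx ds" and nz: "(\<Prod>k<length ds. (?L ! k) (is ! k) (js ! k)) * x js \<noteq> 0"
    show "\<forall>k<length ds. k \<noteq> j \<longrightarrow> js ! k = is ! k"
    proof (intro allI impI)
      fix k assume k: "k < length ds" "k \<noteq> j"
      have "(\<Prod>k<length ds. (?L ! k) (is ! k) (js ! k)) \<noteq> 0" using nz by auto
      then have "(?L ! k) (is ! k) (js ! k) \<noteq> 0" using k(1) by (simp add: prod_zero_iff)
      then show "js ! k = is ! k" using k nthL[OF k(1)] by (simp add: IdM_def split: if_splits)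
    qed
  qed
  also have "\<dots> = (\<Sum>a<ds ! j. G (is ! j) a * x (is[j := a]))"
  proof (rule sum.cong[OF refl])
    fix a assume a: "a \<in> {..<ds ! j}"
    have "(\<Prod>k<length ds. (?L ! k) (is ! k) ((is[j := a]) ! k)) = (\<Prod>k<length ds. if k = j then G (is ! j) a else 1)"
      by (rule prod.cong[OF refl]) (use j li nthL in \<open>auto simp: nth_list_update IdM_def\<close>)
    also have "\<dots> = G (is ! j) a" using j by simp
    finally show "(\<Prod>k<length ds. (?L ! k) (is ! k) ((is[j := a]) ! k)) * x (is[j := a]) = G (is ! j) a * x (is[j := a])"
      by simp
  qed
  finally show ?thesis .
qed

definition col :: "nat list \<Rightarrow> nat \<Rightarrow> (nat list \<Rightarrow> complex) \<Rightarrow> nat list \<Rightarrow> nat \<Rightarrow> complex" where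
  "col ds j x r = (\<lambda>a. if a < ds ! j then x (r[j := a]) else 0)"

lemma col_supp: "col ds j x r \<in> supp {..<ds ! j}"
  by (simp add: col_def supp_def)

lemma sgl_as_mv:
  assumes hi: "is \<in> idx ds" and j: "j < length ds"
  shows "loc_apply ((Ids (length ds))[j := G]) ds x is = mv (ds ! j) G (col ds j x is) (is ! j)"
  unfolding loc_sgl[OF hi j] using idx_nth[OF hi j] by (simp add: mv_def col_def)

lemma col_sgl:
  assumes r: "r \<in> idx ds" and j: "j < length ds"
  shows "col ds j (loc_apply ((Ids (length ds))[j := G]) ds x) r = mv (ds ! j) G (col ds j x r)"
proof
  fix a
  have lr: "length r = length ds" using r idx_length by blast
  show "col ds j (loc_apply ((Ids (length ds))[j := G]) ds x) r a = mv (ds ! j) G (col ds j x r) a"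
  proof (cases "a < ds ! j")
    case True
    have ra: "r[j := a] \<in> idx ds" using idx_upd[OF r True] .
    show ?thesis using True unfolding col_def mv_def
      by (simp add: loc_sgl[OF ra j] lr j)
  qed (simp add: col_def mv_def)
qed

lemma loc_factor1:
  assumes len: "length Ls = length ds" and j: "j < length ds"
  shows "loc_apply Ls ds x = loc_apply ((Ids (length ds))[j := Ls ! j]) ds (loc_apply (Ls[j := IdM]) ds x)"
proof -
  have "loc_apply (mml ds ((Ids (length ds))[j := Ls ! j]) (Ls[j := IdM])) ds = loc_apply Ls ds"
  proof (rule loc_cong)
    fix k a b assume k: "k < length ds" and ab: "a < ds ! k" "b < ds ! k"
    show "(mml ds ((Ids (length ds))[j := Ls ! j]) (Ls[j := IdM]) ! k) a b = (Ls ! k) a b"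
      using k ab j len by (cases "k = j") (simp_all add: nth_mml mm_IdM_left mm_IdM_right)
  qed
  then show ?thesis by (simp add: loc_comp)
qed

lemma loc_factor2:
  assumes len: "length Ls = length ds" and j: "j < length ds"
  shows "loc_apply Ls ds x = loc_apply (Ls[j := IdM]) ds (loc_apply ((Ids (length ds))[j := Ls ! j]) ds x)"
proof -
  have "loc_apply (mml ds (Ls[j := IdM]) ((Ids (length ds))[j := Ls ! j])) ds = loc_apply Ls ds"
  proof (rule loc_cong)
    fix k a b assume k: "k < length ds" and ab: "a < ds ! k" "b < ds ! k"
    show "(mml ds (Ls[j := IdM]) ((Ids (length ds))[j := Ls ! j]) ! k) a b = (Ls ! k) a b"
      using k ab j len by (cases "k = j") (simp_all add: nth_mml mm_IdM_left mm_IdM_right)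
  qed
  then show ?thesis by (simp add: loc_comp)
qed

lemma col_loc_span:
  assumes len: "length Ls = length ds" and j: "j < length ds" and Lj: "Ls ! j = IdM" and r: "r \<in> idx ds"
  shows "col ds j (loc_apply Ls ds x) r \<in> VS.span (col ds j x ` idx ds)"
proof -
  define I0 where "I0 = {t \<in> idx ds. t ! j = 0}"
  define w where "w t = (\<Prod>k\<in>{..<length ds} - {j}. (Ls ! k) (r ! k) (t ! k))" for t
  have lr: "length r = length ds" using r idx_length by blast
  have eq: "col ds j (loc_apply Ls ds x) r = (\<Sum>t\<in>I0. scl (w t) (col ds j x t))"
  proof
    fix a
    show "col ds j (loc_apply Ls ds x) r a = (\<Sum>t\<in>I0. scl (w t) (col ds j x t)) a"
    proof (cases "a < ds ! j")
      case False then show ?thesis by (simp add: col_def sum_fun_apply)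
    next
      case True
      have ra: "r[j := a] \<in> idx ds" using idx_upd[OF r True] .
      have split: "(\<Prod>k<length ds. (Ls ! k) (r[j := a] ! k) (js ! k)) = (if js ! j = a then w js else 0)" for js
      proof -
        have "(\<Prod>k<length ds. (Ls ! k) (r[j := a] ! k) (js ! k)) =
          (Ls ! j) (r[j := a] ! j) (js ! j) * (\<Prod>k\<in>{..<length ds} - {j}. (Ls ! k) (r[j := a] ! k) (js ! k))"
          using j by (subst prod.remove[of _ j]) auto
        also have "(\<Prod>k\<in>{..<length ds} - {j}. (Ls ! k) (r[j := a] ! k) (js ! k)) = w js"
          unfolding w_def by (rule prod.cong) auto
        finally show ?thesis using Lj lr j by (auto simp: IdM_def)
      qed
      have "col ds j (loc_apply Ls ds x) r a = (\<Sum>js\<in>idx ds. (if js ! j = a then w js else 0) * x js)"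
        using True unfolding col_def by (simp add: loc_in[OF ra] split)
      also have "\<dots> = (\<Sum>js\<in>{js \<in> idx ds. js ! j = a}. w js * x js)"
        by (subst sum.inter_filter) (auto intro!: sum.cong)
      also have "{js \<in> idx ds. js ! j = a} = (\<lambda>t. t[j := a]) ` I0"
      proof (rule set_eqI, rule iffI)
        fix js assume js: "js \<in> {js \<in> idx ds. js ! j = a}"
        then have "js[j := 0] \<in> I0" using True idx_upd[of js ds 0 j] idx_length[of js ds] j
          by (auto simp: I0_def)
        moreover have "js = (js[j := 0])[j := a]"
        proof -
          have "js ! j = a" using js by simp
          then have "js[j := a] = js" using list_update_id by metis
          then show ?thesis by simp
        qed
        ultimately show "js \<in> (\<lambda>t. t[j := a]) ` I0" by blast
      next
        fix js assume "js \<in> (\<lambda>t. t[j := a]) ` I0"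
        then obtain t where t: "t \<in> I0" "js = t[j := a]" by blast
        then show "js \<in> {js \<in> idx ds. js ! j = a}"
          using idx_upd[of t ds a j] True idx_length[of t ds] j by (auto simp: I0_def)
      qed
      also have "(\<Sum>js\<in>(\<lambda>t. t[j := a]) ` I0. w js * x js) = (\<Sum>t\<in>I0. w (t[j := a]) * x (t[j := a]))"
      proof (rule sum.reindex[unfolded comp_def])
        show "inj_on (\<lambda>t. t[j := a]) I0"
        proof (rule inj_onI)
          fix t t' assume "t \<in> I0" "t' \<in> I0" "t[j := a] = t'[j := a]"
          then have "(t[j := a])[j := 0] = (t'[j := a])[j := 0]" by simp
          moreover have "t ! j = 0" "t' ! j = 0" using \<open>t \<in> I0\<close> \<open>t' \<in> I0\<close> by (auto simp: I0_def)
          ultimately show "t = t'" by (metis list_update_id list_update_overwrite)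
        qed
      qed
      also have "\<dots> = (\<Sum>t\<in>I0. w t * x (t[j := a]))"
        unfolding w_def by (intro sum.cong refl arg_cong2[where f="(*)"] prod.cong) auto
      also have "\<dots> = (\<Sum>t\<in>I0. scl (w t) (col ds j x t)) a"
        using True by (simp add: sum_fun_apply col_def)
      finally show ?thesis .
    qed
  qed
  show ?thesis unfolding eq
    by (intro VS.span_sum VS.span_scale VS.span_base) (auto simp: I0_def)
qed

lemma col_loc_img:
  assumes len: "length Ms = length ds" and j: "j < length ds" and r: "r \<in> idx ds"
  shows "col ds j (loc_apply Ms ds x) r \<in> VS.span (mv (ds ! j) (Ms ! j) ` col ds j x ` idx ds)"
proof -
  have "col ds j (loc_apply Ms ds x) r = mv (ds ! j) (Ms ! j) (col ds j (loc_apply (Ms[j := IdM]) ds x) r)"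
    by (subst loc_factor1[OF len j]) (rule col_sgl[OF r j])
  moreover have "col ds j (loc_apply (Ms[j := IdM]) ds x) r \<in> VS.span (col ds j x ` idx ds)"
    by (rule col_loc_span) (use len j r in auto)
  ultimately show ?thesis using VP.linear_span_image[OF mv_linear] by blast
qed

lemma loc_repl:
  assumes len: "length Ls = length ds" and j: "j < length ds"
    and eq: "\<And>r. r \<in> idx ds \<Longrightarrow> mv (ds ! j) G (col ds j x r) = mv (ds ! j) (Ls ! j) (col ds j x r)"
  shows "loc_apply (Ls[j := G]) ds x = loc_apply Ls ds x"
proof -
  have s: "loc_apply ((Ids (length ds))[j := G]) ds x = loc_apply ((Ids (length ds))[j := Ls ! j]) ds x"
  proof
    fix "is" show "loc_apply ((Ids (length ds))[j := G]) ds x is = loc_apply ((Ids (length ds))[j := Ls ! j]) ds x is"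
    proof (cases "is \<in> idx ds")
      case True
      then show ?thesis using eq[OF True] by (simp add: sgl_as_mv[OF True j])
    qed (simp add: loc_out)
  qed
  have "loc_apply (Ls[j := G]) ds x = loc_apply (Ls[j := IdM]) ds (loc_apply ((Ids (length ds))[j := G]) ds x)"
    using loc_factor2[of "Ls[j := G]" ds j x] len j by simp
  also have "\<dots> = loc_apply Ls ds x"
    using loc_factor2[OF len j, of x] s by simp
  finally show ?thesis .
qed

lemma loc_repl_all:
  assumes lenL: "length Ls = length ds" and lenN: "length Ns = length ds"
    and eq: "\<And>j r. j < length ds \<Longrightarrow> r \<in> idx ds \<Longrightarrow> mv (ds ! j) (Ns ! j) (col ds j x r) = mv (ds ! j) (Ls ! j) (col ds j x r)"
  shows "loc_apply Ns ds x = loc_apply Ls ds x"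
proof -
  have "k \<le> length ds \<Longrightarrow> loc_apply (take k Ns @ drop k Ls) ds x = loc_apply Ls ds x" for k
  proof (induction k)
    case 0 then show ?case by simp
  next
    case (Suc k)
    let ?L = "take k Ns @ drop k Ls"
    have k: "k < length ds" using Suc by simp
    have lL: "length ?L = length ds" using lenL lenN k by simp
    have Lk: "?L ! k = Ls ! k" using lenL lenN k by (simp add: nth_append)
    have upd: "take (Suc k) Ns @ drop (Suc k) Ls = ?L[k := Ns ! k]"
      by (rule nth_equalityI) (use lenL lenN k in \<open>auto simp: nth_append nth_list_update min_def\<close>)
    have "loc_apply (?L[k := Ns ! k]) ds x = loc_apply ?L ds x"
      by (rule loc_repl[OF lL k]) (simp add: Lk eq[OF k])
    then show ?case using Suc upd by simp
  qed
  from this[of "length ds"] show ?thesis using lenN lenL by simp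
qed

lemma nth_mem_ds: "\<forall>d\<in>set ds. 2 \<le> d \<Longrightarrow> i < length ds \<Longrightarrow> 2 \<le> ds ! i"
  by (metis nth_mem)

lemma hyp_surj:
  assumes m2: "2 \<le> length ds" and d2: "\<forall>d\<in>set ds. 2 \<le> d" and lenB: "length Bs = length ds"
    and psi: "\<psi> \<in> states ds" "\<psi> \<noteq> 0"
    and H: "\<And>y. y \<in> states ds \<Longrightarrow> ipr (idx ds) \<psi> y = 0 \<Longrightarrow> \<exists>x. loc_apply Bs ds x = y"
    and j: "j < length ds"
  shows "\<forall>e\<in>supp {..<ds ! j}. \<exists>x\<in>supp {..<ds ! j}. mv (ds ! j) (Bs ! j) x = e"
proof (rule ccontr)
  assume "\<not> (\<forall>e\<in>supp {..<ds ! j}. \<exists>x\<in>supp {..<ds ! j}. mv (ds ! j) (Bs ! j) x = e)"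
  then obtain e where e: "e \<in> supp {..<ds ! j}" "\<forall>x\<in>supp {..<ds ! j}. mv (ds ! j) (Bs ! j) x \<noteq> e"
    by blast
  define d where "d = ds ! j"
  define M where "M = Bs ! j"
  define S where "S = (\<lambda>b. mv d M (ev b)) ` {..<d}"
  have Ssub: "S \<subseteq> supp {..<d}" unfolding S_def using mv_supp by blast
  have fS: "finite S" unfolding S_def by simp
  have eS: "e \<notin> VS.span S"
  proof
    assume "e \<in> VS.span S"
    then obtain c where c: "e = (\<Sum>b<d. scl (c b) (mv d M (ev b)))"
      using span_repr[of e "\<lambda>b. mv d M (ev b)" "{..<d}"] unfolding S_def by auto
    define x where "x = (\<Sum>b<d. scl (c b) (ev b))"
    have "x \<in> VS.span (ev ` {..<d})" unfolding x_def
      by (intro VS.span_sum VS.span_scale VS.span_base) auto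
    then have xs: "x \<in> supp {..<d}" using supp_span_ev[of "{..<d}"] by simp
    have "mv d M x = (\<Sum>b<d. mv d M (scl (c b) (ev b)))"
      unfolding x_def by (rule VP.linear_sum[OF mv_linear])
    also have "\<dots> = e" unfolding c by (simp add: mv_scl)
    finally show False using e(2) xs unfolding d_def M_def by blast
  qed
  have ed: "e \<in> supp {..<d}" using e(1) d_def by simp
  obtain w where w: "w \<in> supp {..<d}" "w \<noteq> 0" "\<forall>s\<in>S. ipr {..<d} s w = 0"
    using orth_exists2[OF finite_lessThan Ssub fS ed eS] by blast
  have wM: "(\<Sum>a<d. cnj (w a) * M a b) = 0" if b: "b < d" for b
  proof -
    have "ipr {..<d} (mv d M (ev b)) w = 0" using w(3) b unfolding S_def by auto
    then have "ipr {..<d} w (mv d M (ev b)) = 0" using ipr_sym0 by blast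
    then have "(\<Sum>a<d. cnj (w a) * (if a < d then M a b else 0)) = 0"
      by (simp add: ipr_def mv_ev[OF b])
    moreover have "(\<Sum>a<d. cnj (w a) * (if a < d then M a b else 0)) = (\<Sum>a<d. cnj (w a) * M a b)"
      by (rule sum.cong) auto
    ultimately show ?thesis by simp
  qed
  define u where "u r = (\<lambda>is. if is \<in> idx ds \<and> (\<forall>k<length ds. k \<noteq> j \<longrightarrow> is ! k = r ! k) then w (is ! j) else 0)" for r
  have us: "u r \<in> states ds" for r by (simp add: u_def states_def)
  have Z: "ipr (idx ds) (u r) (loc_apply Bs ds x) = 0" if r: "r \<in> idx ds" for r x
  proof -
    define z where "z = loc_apply (Bs[j := IdM]) ds x"
    let ?L = "(Ids (length ds))[j := M]"
    have lr: "length r = length ds" using r idx_length by blast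
    have "loc_apply Bs ds x = loc_apply ?L ds z" unfolding z_def M_def by (rule loc_factor1[OF lenB j])
    then have "ipr (idx ds) (u r) (loc_apply Bs ds x) = (\<Sum>is\<in>idx ds. cnj (u r is) * loc_apply ?L ds z is)"
      by (simp add: ipr_def)
    also have "\<dots> = (\<Sum>a<d. cnj (u r (r[j := a])) * loc_apply ?L ds z (r[j := a]))"
      unfolding d_def
    proof (rule fib_sum[OF r j])
      fix "is" assume "is \<in> idx ds" "cnj (u r is) * loc_apply ?L ds z is \<noteq> 0"
      then show "\<forall>k<length ds. k \<noteq> j \<longrightarrow> is ! k = r ! k" by (auto simp: u_def split: if_splits)
    qed
    also have "\<dots> = (\<Sum>a<d. cnj (w a) * (\<Sum>b<d. M a b * z (r[j := b])))"
    proof (rule sum.cong[OF refl])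
      fix a assume a: "a \<in> {..<d}"
      have ra: "r[j := a] \<in> idx ds" using idx_upd[OF r] a d_def by auto
      have "u r (r[j := a]) = w a" using ra lr j by (simp add: u_def)
      moreover have "loc_apply ?L ds z (r[j := a]) = (\<Sum>b<d. M a b * z (r[j := b]))"
        using loc_sgl[OF ra j] lr j d_def by simp
      ultimately show "cnj (u r (r[j := a])) * loc_apply ?L ds z (r[j := a]) = cnj (w a) * (\<Sum>b<d. M a b * z (r[j := b]))"
        by simp
    qed
    also have "\<dots> = (\<Sum>b<d. (\<Sum>a<d. cnj (w a) * M a b) * z (r[j := b]))"
      by (simp add: sum_distrib_left sum_distrib_right mult.assoc) (rule sum.swap)
    also have "\<dots> = 0" using wM by simp
    finally show ?thesis .
  qed
  have uc: "u r = scl (ipr (idx ds) \<psi> (u r) / ipr (idx ds) \<psi> \<psi>) \<psi>" if r: "r \<in> idx ds" for r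
  proof (rule perp2[OF finite_idx])
    show "\<psi> \<in> supp (idx ds)" using psi(1) states_supp by simp
    show "\<psi> \<noteq> 0" by (rule psi(2))
    show "u r \<in> supp (idx ds)" using us states_supp by simp
    fix y assume y: "y \<in> supp (idx ds)" "ipr (idx ds) \<psi> y = 0"
    then obtain x where "loc_apply Bs ds x = y" using H states_supp by blast
    then show "ipr (idx ds) (u r) y = 0" using Z[OF r] by blast
  qed
  define k where "k = (if j = 0 then 1 else (0::nat))"
  have k: "k < length ds" "k \<noteq> j" using m2 by (auto simp: k_def)
  define r1 where "r1 = replicate (length ds) (0::nat)"
  define r2 where "r2 = r1[k := 1]"
  have dpos: "\<And>i. i < length ds \<Longrightarrow> 2 \<le> ds ! i" using nth_mem_ds[OF d2] by blast
  have dpos0: "0 < ds ! i" if "i < length ds" for i using dpos[OF that] by linarith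
  have r1: "r1 \<in> idx ds" using dpos0 by (auto simp: r1_def idx_def)
  have r2: "r2 \<in> idx ds" unfolding r2_def by (rule idx_upd[OF r1]) (use dpos k in force)
  obtain a0 where a0: "w a0 \<noteq> 0" using w(2) by (auto simp: fun_eq_iff)
  have a0d: "a0 < d" using w(1) a0 by (auto simp: supp_def)
  define p where "p = r1[j := a0]"
  have p: "p \<in> idx ds" unfolding p_def using idx_upd[OF r1] a0d d_def by auto
  have lr1: "length r1 = length ds" by (simp add: r1_def)
  have u1p: "u r1 p = w a0" using p lr1 j by (simp add: u_def p_def)
  have u2p: "u r2 p = 0" using k lr1 by (auto simp: u_def p_def r2_def r1_def)
  have q: "r2[j := a0] \<in> idx ds" using idx_upd[OF r2] a0d d_def by auto
  have u2q: "u r2 (r2[j := a0]) = w a0" using q lr1 j by (simp add: u_def r2_def)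
  define c1 where "c1 = ipr (idx ds) \<psi> (u r1) / ipr (idx ds) \<psi> \<psi>"
  define c2 where "c2 = ipr (idx ds) \<psi> (u r2) / ipr (idx ds) \<psi> \<psi>"
  have "u r1 p = c1 * \<psi> p" using fun_cong[OF uc[OF r1], of p] by (simp add: c1_def)
  then have psip: "\<psi> p \<noteq> 0" using u1p a0 by auto
  have e2: "u r2 q' = c2 * \<psi> q'" for q' using fun_cong[OF uc[OF r2], of q'] by (simp add: c2_def)
  then have "c2 = 0" using u2p psip by (metis mult_eq_0_iff)
  then have "u r2 (r2[j := a0]) = 0" using e2 by simp
  then show False using u2q a0 by simp
qed

lemma extend_party:
  assumes P: "P \<subseteq> supp {..<d}" "finite P"
    and QP: "Q \<subseteq> VS.span (mv d M ` P)" and PQ: "P \<subseteq> VS.span (mv d M' ` Q)"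
  shows "\<exists>N R. (\<forall>p\<in>P. mv d N p = mv d M p) \<and> (\<forall>a<d. \<forall>b<d. mm d N R a b = IdM a b \<and> mm d R N a b = IdM a b)"
proof -
  obtain b where b: "b \<subseteq> P" "VS.independent b" "P \<subseteq> VS.span b"
    using VS.maximal_independent_subset by blast
  have fb: "finite b" using P(2) b(1) finite_subset by blast
  have bs: "b \<subseteq> supp {..<d}" using b(1) P(1) by blast
  define Mb where "Mb = mv d M ` b"
  have fMb: "finite Mb" using fb Mb_def by simp
  have Mbs: "Mb \<subseteq> supp {..<d}" unfolding Mb_def using mv_supp by blast
  have "mv d M ` P \<subseteq> mv d M ` VS.span b" using b(3) by blast
  also have "\<dots> = VS.span Mb" unfolding Mb_def using VP.linear_span_image[OF mv_linear] by simp
  finally have "VS.span (mv d M ` P) \<subseteq> VS.span Mb" using VS.span_minimal VS.subspace_span by blast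
  then have QMb: "Q \<subseteq> VS.span Mb" using QP by blast
  obtain c where c: "c \<subseteq> Mb" "VS.independent c" "Mb \<subseteq> VS.span c"
    using VS.maximal_independent_subset by blast
  have fc: "finite c" using fMb c(1) finite_subset by blast
  have "VS.span Mb \<subseteq> VS.span c" using c(3) VS.span_minimal VS.subspace_span by blast
  then have Qc: "Q \<subseteq> VS.span c" using QMb by blast
  have "mv d M' ` Q \<subseteq> mv d M' ` VS.span c" using Qc by blast
  also have "\<dots> = VS.span (mv d M' ` c)" using VP.linear_span_image[OF mv_linear] by simp
  finally have "VS.span (mv d M' ` Q) \<subseteq> VS.span (mv d M' ` c)" using VS.span_minimal VS.subspace_span by blast
  then have "b \<subseteq> VS.span (mv d M' ` c)" using PQ b(1) by blast
  then have h1: "card b \<le> card (mv d M' ` c)" using VS.independent_span_bound[OF finite_imageI[OF fc] b(2)] by simp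
  have h2: "card (mv d M' ` c) \<le> card c" using card_image_le[OF fc] .
  have h3: "card c \<le> card Mb" using card_mono[OF fMb c(1)] .
  have h4: "card Mb \<le> card b" unfolding Mb_def using card_image_le[OF fb] .
  have cards: "card c = card Mb" "card Mb = card b" using h1 h2 h3 h4 by linarith+
  have "c = Mb" using card_subset_eq[OF fMb c(1) cards(1)] .
  then have indMb: "VS.independent Mb" using c(2) by simp
  have injb: "inj_on (mv d M) b" using eq_card_imp_inj_on[OF fb] cards(2) Mb_def by simp
  obtain Bb where Bb: "b \<subseteq> Bb" "Bb \<subseteq> supp {..<d}" "VS.independent Bb" "supp {..<d} \<subseteq> VS.span Bb"
    using VS.maximal_independent_subset_extend[OF bs b(2)] by blast
  obtain Cc where Cc: "Mb \<subseteq> Cc" "Cc \<subseteq> supp {..<d}" "VS.independent Cc" "supp {..<d} \<subseteq> VS.span Cc"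
    using VS.maximal_independent_subset_extend[OF Mbs indMb] by blast
  have fBb: "finite Bb" and cBb: "card Bb \<le> d" using bound_supp[OF finite_lessThan Bb(2) Bb(3)] by auto
  have fCc: "finite Cc" and cCc: "card Cc \<le> d" using bound_supp[OF finite_lessThan Cc(2) Cc(3)] by auto
  have evs: "ev ` {..<d} \<subseteq> supp {..<d}" by (rule image_subsetI) (rule ev_in, simp)
  have ced: "card (ev ` {..<d}) = d" using card_ev[of "{..<d}"] by simp
  have "ev ` {..<d} \<subseteq> VS.span Bb" using evs Bb(4) by (rule subset_trans)
  then have "card (ev ` {..<d}) \<le> card Bb" using VS.independent_span_bound[OF fBb indep_ev] by simp
  then have cB: "card Bb = d" using cBb ced by simp
  have "ev ` {..<d} \<subseteq> VS.span Cc" using evs Cc(4) by (rule subset_trans)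
  then have "card (ev ` {..<d}) \<le> card Cc" using VS.independent_span_bound[OF fCc indep_ev] by simp
  then have "d \<le> card Cc" using ced by simp
  then have cC: "card Cc = d" using cCc by simp
  have "card (Bb - b) = card (Cc - Mb)"
    using card_Diff_subset[OF fb Bb(1)] card_Diff_subset[OF fMb Cc(1)] cB cC cards(2) by simp
  then obtain g where g: "bij_betw g (Bb - b) (Cc - Mb)"
    using finite_same_card_bij[of "Bb - b" "Cc - Mb"] fBb fCc by blast
  define f where "f v = (if v \<in> b then mv d M v else g v)" for v
  define Nl where "Nl = VP.construct Bb f"
  have linN: "Vector_Spaces.linear scl scl Nl" unfolding Nl_def by (rule VP.linear_construct[OF Bb(3)])
  have NlB: "v \<in> Bb \<Longrightarrow> Nl v = f v" for v unfolding Nl_def by (rule VP.construct_basis[OF Bb(3)])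
  have fB: "f ` Bb \<subseteq> supp {..<d}"
  proof
    fix y assume "y \<in> f ` Bb"
    then obtain v where v: "v \<in> Bb" "y = f v" by blast
    show "y \<in> supp {..<d}"
    proof (cases "v \<in> b")
      case True then show ?thesis using v mv_supp by (simp add: f_def)
    next
      case False
      then have "g v \<in> Cc - Mb" using g v(1) bij_betwE by blast
      then show ?thesis using v False Cc(2) by (auto simp: f_def)
    qed
  qed
  have Nls: "Nl x \<in> supp {..<d}" for x
  proof -
    have "Nl x \<in> VS.span (f ` Bb)" unfolding Nl_def by (rule VP.construct_in_span[OF Bb(3)])
    then show ?thesis using span_sub_supp[OF fB] by blast
  qed
  define N where "N = (\<lambda>a c. Nl (ev c) a)"
  have mvN: "mv d N x = Nl x" if x: "x \<in> supp {..<d}" for x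
  proof -
    have "mv d N x = (\<Sum>c<d. scl (x c) (mv d N (ev c)))" by (rule mv_sum_ev[OF x])
    also have "\<dots> = (\<Sum>c<d. scl (x c) (Nl (ev c)))"
    proof (rule sum.cong[OF refl])
      fix c assume c: "c \<in> {..<d}"
      have "mv d N (ev c) = Nl (ev c)"
        using mv_ev[of c d N] c Nls[of "ev c"] by (auto simp: N_def fun_eq_iff supp_def)
      then show "scl (x c) (mv d N (ev c)) = scl (x c) (Nl (ev c))" by simp
    qed
    also have "\<dots> = (\<Sum>c<d. Nl (scl (x c) (ev c)))" by (simp add: VP.linear_scale[OF linN])
    also have "\<dots> = Nl (\<Sum>c<d. scl (x c) (ev c))" by (rule VP.linear_sum[OF linN, symmetric])
    also have "\<dots> = Nl x" using supp_ev_sum[OF finite_lessThan x] by simp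
    finally show ?thesis .
  qed
  have agree: "\<forall>p\<in>P. mv d N p = mv d M p"
  proof
    fix p assume p: "p \<in> P"
    have "Nl p = mv d M p"
      by (rule VP.linear_eq_on[OF linN mv_linear, of p b]) (use p b(3) Bb(1) NlB in \<open>auto simp: f_def\<close>)
    then show "mv d N p = mv d M p" using mvN p P(1) by auto
  qed
  have surj: "\<exists>x\<in>supp {..<d}. mv d N x = e" if e: "e \<in> supp {..<d}" for e
  proof -
    have "Cc \<subseteq> Nl ` Bb"
    proof
      fix y assume y: "y \<in> Cc"
      show "y \<in> Nl ` Bb"
      proof (cases "y \<in> Mb")
        case True
        then obtain v where "v \<in> b" "y = mv d M v" unfolding Mb_def by blast
        then show ?thesis using NlB Bb(1) by (auto simp: f_def)
      next
        case False
        then have "y \<in> g ` (Bb - b)" using g y bij_betw_imp_surj_on by fastforce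
        then obtain v where "v \<in> Bb - b" "y = g v" by blast
        then show ?thesis using NlB by (auto simp: f_def)
      qed
    qed
    then have "VS.span Cc \<subseteq> VS.span (Nl ` Bb)" by (rule VS.span_mono)
    also have "\<dots> = Nl ` VS.span Bb" by (rule VP.linear_span_image[OF linN])
    finally obtain x where x: "x \<in> VS.span Bb" "e = Nl x" using e Cc(4) by blast
    have "x \<in> supp {..<d}" using x(1) span_sub_supp[OF Bb(2)] by blast
    then show ?thesis using x(2) mvN by auto
  qed
  obtain R where "\<forall>a<d. \<forall>b<d. mm d N R a b = IdM a b \<and> mm d R N a b = IdM a b"
    using mat_inverse[OF surj] by blast
  then show ?thesis using agree by blast
qed

lemma equiv_invertible:
  assumes le1: "slocc_le ds \<psi> \<psi>'" and le2: "slocc_le ds \<psi>' \<psi>"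
  shows "\<exists>Ns Rs. length Ns = length ds \<and> length Rs = length ds \<and> loc_apply Ns ds \<psi>' = \<psi> \<and>
     (\<forall>j<length ds. \<forall>a<ds ! j. \<forall>b<ds ! j. mm (ds ! j) (Ns ! j) (Rs ! j) a b = IdM a b \<and> mm (ds ! j) (Rs ! j) (Ns ! j) a b = IdM a b)"
proof -
  obtain Ms where Ms: "length Ms = length ds" "loc_apply Ms ds \<psi>' = \<psi>" using le1 by (auto simp: slocc_le_def)
  obtain Ms' where Ms': "length Ms' = length ds" "loc_apply Ms' ds \<psi> = \<psi>'" using le2 by (auto simp: slocc_le_def)
  have ex: "\<exists>NR. j < length ds \<longrightarrow> (\<forall>p\<in>col ds j \<psi>' ` idx ds. mv (ds ! j) (fst NR) p = mv (ds ! j) (Ms ! j) p) \<and>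
      (\<forall>a<ds ! j. \<forall>b<ds ! j. mm (ds ! j) (fst NR) (snd NR) a b = IdM a b \<and> mm (ds ! j) (snd NR) (fst NR) a b = IdM a b)" for j
  proof (cases "j < length ds")
    case True
    have P: "col ds j \<psi>' ` idx ds \<subseteq> supp {..<ds ! j}" using col_supp by blast
    have QP: "col ds j \<psi> ` idx ds \<subseteq> VS.span (mv (ds ! j) (Ms ! j) ` col ds j \<psi>' ` idx ds)"
      using col_loc_img[OF Ms(1) True, of _ \<psi>'] Ms(2) by blast
    have PQ: "col ds j \<psi>' ` idx ds \<subseteq> VS.span (mv (ds ! j) (Ms' ! j) ` col ds j \<psi> ` idx ds)"
      using col_loc_img[OF Ms'(1) True, of _ \<psi>] Ms'(2) by blast
    from extend_party[OF P finite_imageI[OF finite_idx] QP PQ] obtain N R where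
      "(\<forall>p\<in>col ds j \<psi>' ` idx ds. mv (ds ! j) N p = mv (ds ! j) (Ms ! j) p) \<and>
       (\<forall>a<ds ! j. \<forall>b<ds ! j. mm (ds ! j) N R a b = IdM a b \<and> mm (ds ! j) R N a b = IdM a b)" by blast
    then show ?thesis by (intro exI[of _ "(N, R)"]) simp
  qed simp
  then obtain NR where NR: "\<And>j. j < length ds \<Longrightarrow> (\<forall>p\<in>col ds j \<psi>' ` idx ds. mv (ds ! j) (fst (NR j)) p = mv (ds ! j) (Ms ! j) p) \<and>
      (\<forall>a<ds ! j. \<forall>b<ds ! j. mm (ds ! j) (fst (NR j)) (snd (NR j)) a b = IdM a b \<and> mm (ds ! j) (snd (NR j)) (fst (NR j)) a b = IdM a b)"
    by metis
  define Ns where "Ns = map (\<lambda>j. fst (NR j)) [0..<length ds]"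
  define Rs where "Rs = map (\<lambda>j. snd (NR j)) [0..<length ds]"
  have "loc_apply Ns ds \<psi>' = loc_apply Ms ds \<psi>'"
    by (rule loc_repl_all[OF Ms(1)]) (use NR in \<open>auto simp: Ns_def\<close>)
  then show ?thesis using NR Ms(2) by (intro exI[of _ Ns] exI[of _ Rs]) (auto simp: Ns_def Rs_def)
qed

definition SL :: "nat \<Rightarrow> (nat list \<Rightarrow> complex) \<Rightarrow> (nat list \<Rightarrow> complex) set" where
  "SL n \<Phi> = sl \<Phi> ` {..<n}"

definition good :: "nat list \<Rightarrow> nat \<Rightarrow> (nat list \<Rightarrow> complex) \<Rightarrow> bool" where
  "good ds n \<Phi> \<longleftrightarrow> \<Phi> \<in> states (n # ds) \<and> card (SL n \<Phi>) = n \<and> VS.independent (SL n \<Phi>)"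

definition orth :: "nat list \<Rightarrow> nat \<Rightarrow> (nat list \<Rightarrow> complex) \<Rightarrow> (nat list \<Rightarrow> complex) \<Rightarrow> bool" where
  "orth ds n \<psi> \<Phi> \<longleftrightarrow> (\<forall>i<n. ipr (idx ds) \<psi> (sl \<Phi> i) = 0)"

lemma SL_sub: "\<Phi> \<in> states (n # ds) \<Longrightarrow> SL n \<Phi> \<subseteq> supp (idx ds)"
  unfolding SL_def using sl_states states_supp by blast

lemma finite_SL[simp]: "finite (SL n \<Phi>)" by (simp add: SL_def)

lemma card_SL: "card (SL n \<Phi>) \<le> n"
  unfolding SL_def using card_image_le[of "{..<n}" "sl \<Phi>"] by simp

lemma orth_SL: "orth ds n \<psi> \<Phi> \<Longrightarrow> \<forall>s\<in>SL n \<Phi>. ipr (idx ds) s \<psi> = 0"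
  unfolding orth_def SL_def using ipr_sym0 by blast

lemma sum_supp: "(\<And>i. i \<in> K \<Longrightarrow> f i \<in> supp I) \<Longrightarrow> (\<Sum>i\<in>K. f i) \<in> supp I"
proof -
  assume "\<And>i. i \<in> K \<Longrightarrow> f i \<in> supp I"
  then have "(\<Sum>i\<in>K. f i) \<in> VS.span (supp I)" by (intro VS.span_sum VS.span_base)
  then show ?thesis using span_supp by blast
qed

locale Dims =
  fixes ds :: "nat list" and n :: nat
  assumes m2: "2 \<le> length ds" and d2: "\<forall>d\<in>set ds. 2 \<le> d" and hn: "Suc n = prod_list ds"
begin

lemma card_I: "card (idx ds) = Suc n" using card_idx hn by simp

lemma good_orth_exists:
  assumes g: "good ds n \<Phi>"
  shows "\<exists>\<psi>\<in>states ds. \<psi> \<noteq> 0 \<and> orth ds n \<psi> \<Phi>"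
proof -
  have sub: "SL n \<Phi> \<subseteq> supp (idx ds)" using g SL_sub good_def by blast
  have "card (SL n \<Phi>) < card (idx ds)" using g card_I by (simp add: good_def)
  from orth_exists[OF finite_idx sub finite_SL this] obtain w where
    w: "w \<in> supp (idx ds)" "w \<noteq> 0" "\<forall>s\<in>SL n \<Phi>. ipr (idx ds) s w = 0" by blast
  have "orth ds n w \<Phi>" unfolding orth_def using w(3) ipr_sym0 by (auto simp: SL_def)
  then show ?thesis using w states_supp by blast
qed

lemma good_span:
  assumes g: "good ds n \<Phi>" and psi: "\<psi> \<in> states ds" "\<psi> \<noteq> 0" "orth ds n \<psi> \<Phi>"
    and y: "y \<in> states ds" "ipr (idx ds) \<psi> y = 0"
  shows "y \<in> VS.span (SL n \<Phi>)"
proof (rule ccontr)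
  assume ny: "y \<notin> VS.span (SL n \<Phi>)"
  have sub: "SL n \<Phi> \<subseteq> supp (idx ds)" using g SL_sub good_def by blast
  have ind: "VS.independent (SL n \<Phi>)" and cS: "card (SL n \<Phi>) = n" using g good_def by auto
  let ?T = "insert y (SL n \<Phi>)"
  have indT: "VS.independent ?T" using VS.independent_insertI[OF ny ind] .
  have yS: "y \<notin> SL n \<Phi>" using ny VS.span_base by blast
  have cT: "card ?T = Suc n" using cS yS by simp
  have Tsub: "?T \<subseteq> supp (idx ds)" using sub y(1) states_supp by blast
  have psiT: "\<psi> \<in> VS.span ?T"
  proof (rule ccontr)
    assume np: "\<psi> \<notin> VS.span ?T"
    have i2: "VS.independent (insert \<psi> ?T)" using VS.independent_insertI[OF np indT] .
    have s2: "insert \<psi> ?T \<subseteq> supp (idx ds)" using Tsub psi(1) states_supp by blast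
    have "card (insert \<psi> ?T) \<le> Suc n" using bound_supp[OF finite_idx s2 i2] card_I by simp
    moreover have "\<psi> \<notin> ?T" using np VS.span_base by blast
    ultimately show False using cT by simp
  qed
  have "\<forall>t\<in>?T. ipr (idx ds) t \<psi> = 0" using orth_SL[OF psi(3)] y(2) ipr_sym0 by blast
  from ipr_span[OF this psiT] have "ipr (idx ds) \<psi> \<psi> = 0" .
  then show False using ipr_self_0[OF finite_idx] psi states_supp by blast
qed

lemma good_unique:
  assumes g: "good ds n \<Phi>" and psi: "\<psi> \<in> states ds" "\<psi> \<noteq> 0" "orth ds n \<psi> \<Phi>"
    and x: "x \<in> states ds" "orth ds n x \<Phi>"
  shows "x = scl (ipr (idx ds) \<psi> x / ipr (idx ds) \<psi> \<psi>) \<psi>"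
proof (rule perp2[OF finite_idx])
  show "\<psi> \<in> supp (idx ds)" "\<psi> \<noteq> 0" "x \<in> supp (idx ds)" using psi x states_supp by auto
  fix y assume y: "y \<in> supp (idx ds)" "ipr (idx ds) \<psi> y = 0"
  have "y \<in> VS.span (SL n \<Phi>)" using good_span[OF g psi] y states_supp by blast
  then have "ipr (idx ds) y x = 0" using ipr_span[OF orth_SL[OF x(2)]] by blast
  then show "ipr (idx ds) x y = 0" using ipr_sym0 by blast
qed

lemma hyp_inv:
  assumes lenB: "length Bs = length ds" and psi: "\<psi> \<in> states ds" "\<psi> \<noteq> 0"
    and H: "\<And>y. y \<in> states ds \<Longrightarrow> ipr (idx ds) \<psi> y = 0 \<Longrightarrow> \<exists>x. loc_apply Bs ds x = y"
  shows "\<exists>Rs. length Rs = length ds \<and> (\<forall>j<length ds. \<forall>a<ds ! j. \<forall>b<ds ! j.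
     mm (ds ! j) (Bs ! j) (Rs ! j) a b = IdM a b \<and> mm (ds ! j) (Rs ! j) (Bs ! j) a b = IdM a b)"
proof -
  have "\<exists>R. j < length ds \<longrightarrow> (\<forall>a<ds ! j. \<forall>b<ds ! j. mm (ds ! j) (Bs ! j) R a b = IdM a b \<and> mm (ds ! j) R (Bs ! j) a b = IdM a b)" for j
  proof (cases "j < length ds")
    case True
    from hyp_surj[OF m2 d2 lenB psi H True] have
      "\<And>e. e \<in> supp {..<ds ! j} \<Longrightarrow> \<exists>x\<in>supp {..<ds ! j}. mv (ds ! j) (Bs ! j) x = e" by blast
    from mat_inverse[OF this] show ?thesis by blast
  qed simp
  then obtain R where R: "\<And>j. j < length ds \<Longrightarrow> (\<forall>a<ds ! j. \<forall>b<ds ! j. mm (ds ! j) (Bs ! j) (R j) a b = IdM a b \<and> mm (ds ! j) (R j) (Bs ! j) a b = IdM a b)"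
    by metis
  show ?thesis by (rule exI[of _ "map R [0..<length ds]"]) (simp add: R)
qed

end

lemma loc_inv:
  assumes "\<And>j a b. j < length ds \<Longrightarrow> a < ds ! j \<Longrightarrow> b < ds ! j \<Longrightarrow> mm (ds ! j) (Bs ! j) (Rs ! j) a b = IdM a b"
    and x: "x \<in> states ds"
  shows "loc_apply Bs ds (loc_apply Rs ds x) = x"
proof -
  have "loc_apply (mml ds Bs Rs) ds = loc_apply (Ids (length ds)) ds"
    by (rule loc_cong) (simp add: nth_mml assms(1))
  then show ?thesis using loc_comp loc_Ids[OF x] by metis
qed

context Dims begin

lemma le_transfer:
  assumes g: "good ds n \<Phi>" and g': "good ds n \<Phi>'" and le: "slocc_le (n # ds) \<Phi>' \<Phi>"
    and psi: "\<psi> \<in> states ds" "\<psi> \<noteq> 0" "orth ds n \<psi> \<Phi>"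
    and psi': "\<psi>' \<in> states ds" "\<psi>' \<noteq> 0" "orth ds n \<psi>' \<Phi>'"
  shows "slocc_le ds \<psi> \<psi>'"
proof -
  obtain L where L: "length L = Suc (length ds)" "loc_apply L (n # ds) \<Phi> = \<Phi>'"
    using le by (auto simp: slocc_le_def)
  then obtain A Bs where AB: "L = A # Bs" by (cases L) auto
  have lenB: "length Bs = length ds" using L(1) AB by simp
  let ?B = "loc_apply Bs ds"
  have slc: "sl \<Phi>' k = (\<Sum>a<n. scl (A k a) (?B (sl \<Phi> a)))" if "k < n" for k
    using sl_loc_Cons[OF lenB that, of A \<Phi>] L(2) AB by simp
  have S'sub: "SL n \<Phi>' \<subseteq> VS.span (?B ` SL n \<Phi>)"
  proof
    fix s assume "s \<in> SL n \<Phi>'"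
    then obtain k where k: "k < n" "s = sl \<Phi>' k" by (auto simp: SL_def)
    show "s \<in> VS.span (?B ` SL n \<Phi>)" unfolding k(2) slc[OF k(1)]
      by (intro VS.span_sum VS.span_scale VS.span_base) (auto simp: SL_def)
  qed
  have ind': "VS.independent (SL n \<Phi>')" and c': "card (SL n \<Phi>') = n" using g' good_def by auto
  have "card (?B ` SL n \<Phi>) \<le> n" using card_image_le[OF finite_SL] card_SL le_trans by blast
  then have BS: "?B ` SL n \<Phi> \<subseteq> VS.span (SL n \<Phi>')"
    using ext_span[OF finite_imageI[OF finite_SL] S'sub ind'] c' by simp
  define z where "z = loc_apply (adjs Bs) ds \<psi>'"
  have zs: "z \<in> states ds" unfolding z_def by (rule loc_states)
  have "orth ds n z \<Phi>" unfolding orth_def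
  proof (intro allI impI)
    fix i assume i: "i < n"
    have "?B (sl \<Phi> i) \<in> VS.span (SL n \<Phi>')" using BS i by (auto simp: SL_def)
    then have "ipr (idx ds) (?B (sl \<Phi> i)) \<psi>' = 0" using ipr_span[OF orth_SL[OF psi'(3)]] by blast
    then have "ipr (idx ds) \<psi>' (?B (sl \<Phi> i)) = 0" using ipr_sym0 by blast
    then show "ipr (idx ds) z (sl \<Phi> i) = 0" unfolding z_def using loc_adj[OF lenB] by simp
  qed
  from good_unique[OF g psi zs this] obtain c where zc: "z = scl c \<psi>" by blast
  show ?thesis
  proof (cases "c = 0")
    case False
    have "\<psi> = scl (1 / c) z" using zc False by (simp add: scl_def fun_eq_iff)
    also have "\<dots> = loc_apply ((adjs Bs)[0 := (\<lambda>a b. (1 / c) * (adjs Bs ! 0) a b)]) ds \<psi>'"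
    proof -
      have ne: "0 < length ds" using m2 by (cases ds) auto
      show ?thesis unfolding z_def using loc_scale_first[of "adjs Bs" ds "1 / c" \<psi>'] lenB ne by simp
    qed
    finally show ?thesis unfolding slocc_le_def using lenB by (intro exI[of _ "(adjs Bs)[0 := (\<lambda>a b. (1 / c) * (adjs Bs ! 0) a b)]"]) simp
  next
    case True
    then have z0: "z = 0" using zc by (simp add: scl_def fun_eq_iff zero_fun_def)
    have H: "\<exists>x. ?B x = y" if y: "y \<in> states ds" "ipr (idx ds) \<psi>' y = 0" for y
    proof -
      have "y \<in> VS.span (SL n \<Phi>')" using good_span[OF g' psi' y] .
      also have "\<dots> \<subseteq> VS.span (?B ` SL n \<Phi>)" using S'sub VS.span_minimal VS.subspace_span by blast
      also have "\<dots> = ?B ` VS.span (SL n \<Phi>)" by (rule VP.linear_span_image[OF loc_linear])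
      finally show ?thesis by blast
    qed
    obtain Rs where Rs: "length Rs = length ds" "\<forall>j<length ds. \<forall>a<ds ! j. \<forall>b<ds ! j.
       mm (ds ! j) (Bs ! j) (Rs ! j) a b = IdM a b \<and> mm (ds ! j) (Rs ! j) (Bs ! j) a b = IdM a b"
      using hyp_inv[OF lenB psi'(1,2) H] by blast
    have "?B (loc_apply Rs ds \<psi>') = \<psi>'" by (rule loc_inv) (use Rs psi'(1) in auto)
    then have "ipr (idx ds) \<psi>' \<psi>' = ipr (idx ds) \<psi>' (?B (loc_apply Rs ds \<psi>'))" by simp
    also have "\<dots> = ipr (idx ds) z (loc_apply Rs ds \<psi>')" unfolding z_def using loc_adj[OF lenB] by simp
    also have "\<dots> = 0" using z0 by simp
    finally have "\<psi>' = 0" using ipr_self_0[OF finite_idx] psi'(1) states_supp by blast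
    then show ?thesis using psi'(2) by simp
  qed
qed

end

lemma slocc_le_refl: "x \<in> states ds \<Longrightarrow> slocc_le ds x x"
  unfolding slocc_le_def using loc_Ids by (intro exI[of _ "Ids (length ds)"]) simp

lemma slocc_le_trans: "slocc_le ds a b \<Longrightarrow> slocc_le ds b c \<Longrightarrow> slocc_le ds a c"
  unfolding slocc_le_def using loc_comp by (metis length_mml)

lemma class_eq: assumes "x \<in> states ds" "y \<in> states ds"
  shows "slocc_class ds x = slocc_class ds y \<longleftrightarrow> slocc_equiv ds x y"
proof
  assume "slocc_class ds x = slocc_class ds y"
  moreover have "x \<in> slocc_class ds x" using assms slocc_le_refl by (simp add: slocc_class_def slocc_equiv_def)
  ultimately show "slocc_equiv ds x y" by (simp add: slocc_class_def)
next
  assume "slocc_equiv ds x y"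
  then show "slocc_class ds x = slocc_class ds y"
    unfolding slocc_class_def slocc_equiv_def using slocc_le_trans by blast
qed

context Dims begin

lemma inj_transfer:
  assumes M: "slocc_maximal (n # ds) \<Phi>" "slocc_maximal (n # ds) \<Phi>'"
    and g: "good ds n \<Phi>"
    and psi: "\<psi> \<in> states ds" "\<psi> \<noteq> 0" "orth ds n \<psi> \<Phi>"
    and psi': "\<psi>' \<in> states ds" "\<psi>' \<noteq> 0" "orth ds n \<psi>' \<Phi>'"
    and eq: "slocc_equiv ds \<psi> \<psi>'"
  shows "slocc_equiv (n # ds) \<Phi> \<Phi>'"
proof -
  have Ps: "\<Phi> \<in> states (n # ds)" "\<Phi>' \<in> states (n # ds)" using M by (auto simp: slocc_maximal_def)
  obtain Ns Rs where NR: "length Ns = length ds" "length Rs = length ds" "loc_apply Ns ds \<psi>' = \<psi>"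
    "\<And>j a b. j < length ds \<Longrightarrow> a < ds ! j \<Longrightarrow> b < ds ! j \<Longrightarrow> mm (ds ! j) (Ns ! j) (Rs ! j) a b = IdM a b"
    "\<And>j a b. j < length ds \<Longrightarrow> a < ds ! j \<Longrightarrow> b < ds ! j \<Longrightarrow> mm (ds ! j) (Rs ! j) (Ns ! j) a b = IdM a b"
    using equiv_invertible[of ds \<psi> \<psi>'] eq unfolding slocc_equiv_def by blast
  let ?aN = "adjs Ns" and ?aR = "adjs Rs"
  have aNaR: "loc_apply ?aN ds (loc_apply ?aR ds y) = y" if y: "y \<in> states ds" for y
  proof (rule loc_inv[OF _ y])
    fix j a b assume j: "j < length ds" and ab: "a < ds ! j" "b < ds ! j"
    show "mm (ds ! j) (?aN ! j) (?aR ! j) a b = IdM a b"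
      using NR(1,2) j NR(5)[OF j ab(2) ab(1)] by (simp add: adjs_def mm_adjM IdM_cnj)
  qed
  have RNpsi: "loc_apply Rs ds \<psi> = \<psi>'"
    unfolding NR(3)[symmetric] by (rule loc_inv[OF _ psi'(1)]) (rule NR(5))
  have lenaN: "length ?aN = length ds" using NR(1) by simp
  have ex: "\<exists>a. sl \<Phi>' k = (\<Sum>i<n. scl (a i) (loc_apply ?aN ds (sl \<Phi> i)))" if k: "k < n" for k
  proof -
    define y where "y = sl \<Phi>' k"
    have ys: "y \<in> states ds" unfolding y_def by (rule sl_states[OF Ps(2)])
    define x where "x = loc_apply ?aR ds y"
    have xs: "x \<in> states ds" unfolding x_def by (rule loc_states)
    have "ipr (idx ds) \<psi> x = ipr (idx ds) (loc_apply (adjs ?aR) ds \<psi>) y"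
      unfolding x_def by (rule loc_adj) (simp add: NR(2))
    also have "\<dots> = ipr (idx ds) \<psi>' y" using RNpsi by simp
    also have "\<dots> = 0" using psi'(3) k unfolding orth_def y_def by blast
    finally have "x \<in> VS.span (SL n \<Phi>)" using good_span[OF g psi xs] by blast
    then obtain a where a: "x = (\<Sum>i<n. scl (a i) (sl \<Phi> i))"
      using span_repr[of x "sl \<Phi>" "{..<n}"] unfolding SL_def by auto
    have "y = loc_apply ?aN ds x" unfolding x_def using aNaR[OF ys] by simp
    also have "\<dots> = (\<Sum>i<n. scl (a i) (loc_apply ?aN ds (sl \<Phi> i)))" unfolding a by (simp add: loc_sum loc_scl)
    finally show ?thesis unfolding y_def by blast
  qed
  then obtain A where A: "\<And>k. k < n \<Longrightarrow> sl \<Phi>' k = (\<Sum>i<n. scl (A k i) (loc_apply ?aN ds (sl \<Phi> i)))"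
    by metis
  have "\<Phi>' = loc_apply (A # ?aN) (n # ds) \<Phi>"
  proof (rule states_eq_sl[OF Ps(2) loc_states])
    fix k assume k: "k < n"
    show "sl \<Phi>' k = sl (loc_apply (A # ?aN) (n # ds) \<Phi>) k"
      unfolding sl_loc_Cons[OF lenaN k] A[OF k] ..
  qed
  then have le: "slocc_le (n # ds) \<Phi>' \<Phi>" unfolding slocc_le_def using lenaN
    by (intro exI[of _ "A # ?aN"]) simp
  then have "slocc_le (n # ds) \<Phi> \<Phi>'" using M(2) Ps(1) by (simp add: slocc_maximal_def)
  then show ?thesis using le by (simp add: slocc_equiv_def)
qed

lemma good_maximal:
  assumes g: "good ds n \<Phi>"
  shows "slocc_maximal (n # ds) \<Phi>"
  unfolding slocc_maximal_def
proof (intro conjI ballI impI)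
  show Ps: "\<Phi> \<in> states (n # ds)" using g by (simp add: good_def)
  fix \<Psi> assume Psi: "\<Psi> \<in> states (n # ds)" and le: "slocc_le (n # ds) \<Phi> \<Psi>"
  obtain L where L: "length L = Suc (length ds)" "loc_apply L (n # ds) \<Psi> = \<Phi>"
    using le by (auto simp: slocc_le_def)
  then obtain A Bs where AB: "L = A # Bs" by (cases L) auto
  have lenB: "length Bs = length ds" using L(1) AB by simp
  obtain \<psi> where psi: "\<psi> \<in> states ds" "\<psi> \<noteq> 0" "orth ds n \<psi> \<Phi>" using good_orth_exists[OF g] by blast
  define y where "y i = (\<Sum>k<n. scl (A i k) (sl \<Psi> k))" for i
  have slP: "sl \<Phi> i = loc_apply Bs ds (y i)" if i: "i < n" for i
    using sl_loc_Cons[OF lenB i, of A \<Psi>] L(2) AB by (simp add: y_def loc_sum loc_scl)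
  have yspan: "y i \<in> VS.span (SL n \<Psi>)" for i
    unfolding y_def by (intro VS.span_sum VS.span_scale VS.span_base) (auto simp: SL_def)
  have ys: "y i \<in> states ds" for i
    unfolding y_def states_supp by (intro sum_supp supp_scl) (use sl_states[OF Psi] states_supp in auto)
  have H: "\<exists>x. loc_apply Bs ds x = y'" if y': "y' \<in> states ds" "ipr (idx ds) \<psi> y' = 0" for y'
  proof -
    have "y' \<in> VS.span (SL n \<Phi>)" using good_span[OF g psi y'] .
    then obtain c where c: "y' = (\<Sum>i<n. scl (c i) (sl \<Phi> i))"
      using span_repr[of y' "sl \<Phi>" "{..<n}"] unfolding SL_def by auto
    have "y' = (\<Sum>i<n. scl (c i) (loc_apply Bs ds (y i)))" unfolding c by (intro sum.cong refl) (simp add: slP)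
    also have "\<dots> = loc_apply Bs ds (\<Sum>i<n. scl (c i) (y i))" by (simp add: loc_sum loc_scl)
    finally show ?thesis by blast
  qed
  obtain Rs where Rs: "length Rs = length ds" "\<forall>j<length ds. \<forall>a<ds ! j. \<forall>b<ds ! j.
     mm (ds ! j) (Bs ! j) (Rs ! j) a b = IdM a b \<and> mm (ds ! j) (Rs ! j) (Bs ! j) a b = IdM a b"
    using hyp_inv[OF lenB psi(1,2) H] by blast
  have RB: "loc_apply Rs ds (loc_apply Bs ds x) = x" if "x \<in> states ds" for x
    by (rule loc_inv[OF _ that]) (use Rs in auto)
  have BR: "loc_apply Bs ds (loc_apply Rs ds x) = x" if "x \<in> states ds" for x
    by (rule loc_inv[OF _ that]) (use Rs in auto)
  have Rsl: "loc_apply Rs ds (sl \<Phi> i) = y i" if "i < n" for i using RB[OF ys] slP[OF that] by simp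
  define Y where "Y = loc_apply Rs ds ` SL n \<Phi>"
  have SLs: "VS.span (SL n \<Phi>) \<subseteq> states ds" using span_sub_supp[OF SL_sub[OF Ps]] states_supp by simp
  have inj: "inj_on (loc_apply Rs ds) (VS.span (SL n \<Phi>))"
  proof (rule inj_onI)
    fix x x' assume x: "x \<in> VS.span (SL n \<Phi>)" "x' \<in> VS.span (SL n \<Phi>)" "loc_apply Rs ds x = loc_apply Rs ds x'"
    then show "x = x'" using BR SLs by (metis subsetD)
  qed
  have indS: "VS.independent (SL n \<Phi>)" and cS: "card (SL n \<Phi>) = n" using g by (auto simp: good_def)
  have indY: "VS.independent Y" unfolding Y_def
    by (rule VP.linear_independent_injective_image[OF loc_linear indS inj])
  have cY: "card Y = n" unfolding Y_def using card_image[OF inj_on_subset[OF inj VS.span_superset]] cS by simp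
  have Ysub: "Y \<subseteq> VS.span (SL n \<Psi>)" unfolding Y_def using Rsl yspan by (auto simp: SL_def)
  have "SL n \<Psi> \<subseteq> VS.span Y" using ext_span[OF finite_SL Ysub indY] card_SL cY by simp
  moreover have Yeq: "Y = (\<lambda>i. loc_apply Rs ds (sl \<Phi> i)) ` {..<n}" unfolding Y_def SL_def by (simp add: image_image)
  ultimately have ex: "\<exists>a. sl \<Psi> k = (\<Sum>i<n. scl (a i) (loc_apply Rs ds (sl \<Phi> i)))" if k: "k < n" for k
    using span_repr[of "sl \<Psi> k" "\<lambda>i. loc_apply Rs ds (sl \<Phi> i)" "{..<n}"] k by (auto simp: SL_def)
  then obtain A' where A': "\<And>k. k < n \<Longrightarrow> sl \<Psi> k = (\<Sum>i<n. scl (A' k i) (loc_apply Rs ds (sl \<Phi> i)))"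
    by metis
  have "\<Psi> = loc_apply (A' # Rs) (n # ds) \<Phi>"
  proof (rule states_eq_sl[OF Psi loc_states])
    fix k assume k: "k < n"
    show "sl \<Psi> k = sl (loc_apply (A' # Rs) (n # ds) \<Phi>) k"
      unfolding sl_loc_Cons[OF Rs(1) k] A'[OF k] ..
  qed
  then show "slocc_le (n # ds) \<Psi> \<Phi>" unfolding slocc_le_def using Rs(1)
    by (intro exI[of _ "A' # Rs"]) simp
qed

lemma maximal_good:
  assumes M: "slocc_maximal (n # ds) \<Phi>"
  shows "good ds n \<Phi>"
proof (rule ccontr)
  assume ng: "\<not> good ds n \<Phi>"
  have Ps: "\<Phi> \<in> states (n # ds)" using M by (simp add: slocc_maximal_def)
  obtain b where b: "b \<subseteq> SL n \<Phi>" "VS.independent b" "SL n \<Phi> \<subseteq> VS.span b"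
    using VS.maximal_independent_subset by blast
  have fb: "finite b" using b(1) finite_subset finite_SL by blast
  have cb: "card b < n"
  proof (rule ccontr)
    assume "\<not> card b < n"
    then have "n \<le> card b" by simp
    moreover have "card b \<le> card (SL n \<Phi>)" using card_mono[OF finite_SL b(1)] .
    ultimately have eqc: "card b = card (SL n \<Phi>)" "card (SL n \<Phi>) = n" using card_SL[of n \<Phi>] by linarith+
    have "b = SL n \<Phi>" using card_subset_eq[OF finite_SL b(1) eqc(1)] .
    then show False using ng b(2) eqc(2) Ps by (simp add: good_def)
  qed
  have bsup: "b \<subseteq> supp (idx ds)" using b(1) SL_sub[OF Ps] by blast
  obtain c' where c': "b \<subseteq> c'" "c' \<subseteq> supp (idx ds)" "VS.independent c'" "supp (idx ds) \<subseteq> VS.span c'"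
    using VS.maximal_independent_subset_extend[OF bsup b(2)] by blast
  have fc': "finite c'" using bound_supp[OF finite_idx c'(2,3)] by simp
  have evs: "ev ` idx ds \<subseteq> supp (idx ds)" by (rule image_subsetI) (rule ev_in)
  have "ev ` idx ds \<subseteq> VS.span c'" using evs c'(4) by (rule subset_trans)
  then have "card (ev ` idx ds) \<le> card c'" using VS.independent_span_bound[OF fc' indep_ev] by simp
  then have cc': "Suc n \<le> card c'" using card_ev[of "idx ds"] card_I by simp
  have "n - card b \<le> card (c' - b)" using card_Diff_subset[OF fb c'(1)] cc' by simp
  then obtain c'' where c'': "c'' \<subseteq> c' - b" "card c'' = n - card b" "finite c''"
    by (rule obtain_subset_with_card_n)
  define c where "c = b \<union> c''"
  have fc: "finite c" using fb c''(3) c_def by simp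
  have cc: "card c = n" unfolding c_def using card_Un_disjoint[OF fb c''(3)] c''(1,2) cb by auto
  have csub: "c \<subseteq> c'" using c'(1) c''(1) c_def by blast
  have indc: "VS.independent c" using VS.independent_mono[OF c'(3) csub] .
  have csupp: "c \<subseteq> supp (idx ds)" using csub c'(2) by blast
  obtain \<chi> where chi: "bij_betw \<chi> {..<n} c"
    using ex_bij_betw_nat_finite[OF fc] cc by (auto simp: atLeast0LessThan)
  have chis: "\<chi> k \<in> states ds" if "k < n" for k using chi csupp that states_supp bij_betwE by blast
  have cim: "c = \<chi> ` {..<n}" using chi bij_betw_imp_surj_on by metis
  define \<Psi> where "\<Psi> = mk n ds \<chi>"
  have Psi: "\<Psi> \<in> states (n # ds)" unfolding \<Psi>_def by (rule mk_states)
  have slPsi: "sl \<Psi> k = \<chi> k" if "k < n" for k unfolding \<Psi>_def by (rule sl_mk[where f=\<chi>, OF that chis[OF that]])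
  have ex: "\<exists>a. sl \<Phi> i = (\<Sum>k<n. scl (a k) (\<chi> k))" if i: "i < n" for i
  proof -
    have "sl \<Phi> i \<in> VS.span b" using b(3) i by (auto simp: SL_def)
    also have "\<dots> \<subseteq> VS.span c" by (rule VS.span_mono) (simp add: c_def)
    finally show ?thesis using span_repr[of "sl \<Phi> i" \<chi> "{..<n}"] cim by auto
  qed
  then obtain A where A: "\<And>i. i < n \<Longrightarrow> sl \<Phi> i = (\<Sum>k<n. scl (A i k) (\<chi> k))" by metis
  have "\<Phi> = loc_apply (A # Ids (length ds)) (n # ds) \<Psi>"
  proof (rule states_eq_sl[OF Ps loc_states])
    fix i assume i: "i < n"
    have "sl (loc_apply (A # Ids (length ds)) (n # ds) \<Psi>) i = (\<Sum>k<n. scl (A i k) (loc_apply (Ids (length ds)) ds (sl \<Psi> k)))"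
      by (rule sl_loc_Cons[OF length_Ids i])
    also have "\<dots> = (\<Sum>k<n. scl (A i k) (\<chi> k))"
      by (intro sum.cong refl) (simp add: slPsi loc_Ids chis)
    finally show "sl \<Phi> i = sl (loc_apply (A # Ids (length ds)) (n # ds) \<Psi>) i" using A[OF i] by simp
  qed
  then have "slocc_le (n # ds) \<Phi> \<Psi>" unfolding slocc_le_def
    by (intro exI[of _ "A # Ids (length ds)"]) simp
  then have "slocc_le (n # ds) \<Psi> \<Phi>" using M Psi by (simp add: slocc_maximal_def)
  then obtain L where L: "length L = Suc (length ds)" "loc_apply L (n # ds) \<Phi> = \<Psi>"
    by (auto simp: slocc_le_def)
  then obtain A' Bs where AB: "L = A' # Bs" by (cases L) auto
  have lenB: "length Bs = length ds" using L(1) AB by simp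
  have "c \<subseteq> VS.span (loc_apply Bs ds ` b)"
  proof
    fix v assume "v \<in> c"
    then obtain k where k: "k < n" "v = \<chi> k" using cim by blast
    have "v = (\<Sum>i<n. scl (A' k i) (loc_apply Bs ds (sl \<Phi> i)))"
      using sl_loc_Cons[OF lenB k(1), of A' \<Phi>] L(2) AB k slPsi by simp
    moreover have "loc_apply Bs ds (sl \<Phi> i) \<in> VS.span (loc_apply Bs ds ` b)" if "i < n" for i
    proof -
      have "sl \<Phi> i \<in> VS.span b" using b(3) that by (auto simp: SL_def)
      then have "loc_apply Bs ds (sl \<Phi> i) \<in> loc_apply Bs ds ` VS.span b" by blast
      then show ?thesis using VP.linear_span_image[OF loc_linear] by blast
    qed
    ultimately show "v \<in> VS.span (loc_apply Bs ds ` b)"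
      by (auto intro!: VS.span_sum VS.span_scale)
  qed
  then have "card c \<le> card (loc_apply Bs ds ` b)"
    using VS.independent_span_bound[OF finite_imageI[OF fb] indc] by simp
  also have "\<dots> \<le> card b" using card_image_le[OF fb] .
  finally show False using cc cb by simp
qed

lemma surj_exists:
  assumes psi: "\<psi> \<in> states ds" "\<psi> \<noteq> 0"
  shows "\<exists>\<Phi>. slocc_maximal (n # ds) \<Phi> \<and> orth ds n \<psi> \<Phi>"
proof -
  define H where "H = {y \<in> supp (idx ds). ipr (idx ds) \<psi> y = 0}"
  have psis: "\<psi> \<in> supp (idx ds)" using psi states_supp by simp
  have subH: "VS.subspace H" unfolding H_def VS.subspace_def
    by (auto intro: supp_add supp_scl simp: ipr_add_right ipr_scl_right)
  obtain b where b: "b \<subseteq> H" "VS.independent b" "H \<subseteq> VS.span b"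
    using VS.maximal_independent_subset by blast
  have bsup: "b \<subseteq> supp (idx ds)" using b(1) H_def by blast
  have fb: "finite b" using bound_supp[OF finite_idx bsup b(2)] by simp
  have nz: "ipr (idx ds) \<psi> \<psi> \<noteq> 0" using ipr_self_0[OF finite_idx psis] psi(2) by blast
  have spb: "VS.span b \<subseteq> H" using VS.span_minimal[OF b(1) subH] .
  have psb: "\<psi> \<notin> VS.span b" using spb nz H_def by blast
  have ind2: "VS.independent (insert \<psi> b)" using VS.independent_insertI[OF psb b(2)] .
  have sub2: "insert \<psi> b \<subseteq> supp (idx ds)" using bsup psis by blast
  have pnb: "\<psi> \<notin> b" using psb VS.span_base by blast
  have "card (insert \<psi> b) \<le> Suc n" using bound_supp[OF finite_idx sub2 ind2] card_I by simp
  then have le1: "card b \<le> n" using pnb fb by simp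
  have spanall: "supp (idx ds) \<subseteq> VS.span (insert \<psi> b)"
  proof
    fix x assume x: "x \<in> supp (idx ds)"
    define c where "c = ipr (idx ds) \<psi> x / ipr (idx ds) \<psi> \<psi>"
    have "x - scl c \<psi> \<in> H" unfolding H_def c_def using nz x psis
      by (simp add: ipr_diff_right ipr_scl_right supp_diff supp_scl)
    then have "x - scl c \<psi> \<in> VS.span (insert \<psi> b)" using b(3) VS.span_mono[of b "insert \<psi> b"] by blast
    moreover have "scl c \<psi> \<in> VS.span (insert \<psi> b)" by (intro VS.span_scale VS.span_base) simp
    ultimately have "(x - scl c \<psi>) + scl c \<psi> \<in> VS.span (insert \<psi> b)" by (rule VS.span_add)
    then show "x \<in> VS.span (insert \<psi> b)" by simp
  qed
  have evs: "ev ` idx ds \<subseteq> supp (idx ds)" by (rule image_subsetI) (rule ev_in)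
  have "ev ` idx ds \<subseteq> VS.span (insert \<psi> b)" using evs spanall by (rule subset_trans)
  then have "card (ev ` idx ds) \<le> card (insert \<psi> b)"
    using VS.independent_span_bound[OF finite.insertI[OF fb] indep_ev] by simp
  then have "Suc n \<le> Suc (card b)" using card_ev[of "idx ds"] card_I pnb fb by simp
  then have cb: "card b = n" using le1 by simp
  obtain \<chi> where chi: "bij_betw \<chi> {..<n} b"
    using ex_bij_betw_nat_finite[OF fb] cb by (auto simp: atLeast0LessThan)
  have bim: "b = \<chi> ` {..<n}" using chi bij_betw_imp_surj_on by metis
  have chis: "\<chi> k \<in> states ds" if "k < n" for k using chi bsup that states_supp bij_betwE by blast
  define \<Phi> where "\<Phi> = mk n ds \<chi>"
  have slP: "sl \<Phi> k = \<chi> k" if "k < n" for k unfolding \<Phi>_def by (rule sl_mk[where f=\<chi>, OF that chis[OF that]])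
  have SLb: "SL n \<Phi> = b" unfolding SL_def bim using slP by (auto simp: image_def)
  have "good ds n \<Phi>" unfolding good_def SLb using cb b(2) mk_states \<Phi>_def by simp
  moreover have "orth ds n \<psi> \<Phi>" unfolding orth_def
  proof (intro allI impI)
    fix i assume i: "i < n"
    have "\<chi> i \<in> H" using chi b(1) i bij_betwE by blast
    then show "ipr (idx ds) \<psi> (sl \<Phi> i) = 0" using slP[OF i] H_def by simp
  qed
  ultimately show ?thesis using good_maximal by blast
qed

lemma key:
  assumes M: "slocc_maximal (n # ds) \<Phi>" "slocc_maximal (n # ds) \<Phi>'"
    and psi: "\<psi> \<in> states ds" "\<psi> \<noteq> 0" "orth ds n \<psi> \<Phi>"
    and psi': "\<psi>' \<in> states ds" "\<psi>' \<noteq> 0" "orth ds n \<psi>' \<Phi>'"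
  shows "slocc_equiv (n # ds) \<Phi> \<Phi>' \<longleftrightarrow> slocc_equiv ds \<psi> \<psi>'"
proof
  have g: "good ds n \<Phi>" "good ds n \<Phi>'" using maximal_good M by auto
  assume "slocc_equiv (n # ds) \<Phi> \<Phi>'"
  then have l1: "slocc_le (n # ds) \<Phi>' \<Phi>" and l2: "slocc_le (n # ds) \<Phi> \<Phi>'" by (auto simp: slocc_equiv_def)
  show "slocc_equiv ds \<psi> \<psi>'" unfolding slocc_equiv_def
    using le_transfer[OF g(1) g(2) l1 psi psi'] le_transfer[OF g(2) g(1) l2 psi' psi] by blast
next
  assume "slocc_equiv ds \<psi> \<psi>'"
  then show "slocc_equiv (n # ds) \<Phi> \<Phi>'" using inj_transfer[OF M maximal_good[OF M(1)] psi psi'] by blast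
qed

end

theorem mainTheorem10:
  fixes ds :: "nat list"
  assumes "length ds \<ge> 2"
    and "\<forall>d\<in>set ds. d \<ge> 2"
  shows "\<exists>F. bij_betw F
            (slocc_class ((prod_list ds - 1) # ds) ` {\<Phi>. slocc_maximal ((prod_list ds - 1) # ds) \<Phi>})
            (slocc_class ds ` (states ds - {\<lambda>_. 0}))
          \<and> (\<forall>\<Phi> \<psi>. slocc_maximal ((prod_list ds - 1) # ds) \<Phi> \<longrightarrow> \<psi> \<in> states ds \<longrightarrow> \<psi> \<noteq> (\<lambda>_. 0) \<longrightarrow>
               (\<forall>i < prod_list ds - 1. (\<Sum>js\<in>idx ds. cnj (\<psi> js) * \<Phi> (i # js)) = 0) \<longrightarrow>
               F (slocc_class ((prod_list ds - 1) # ds) \<Phi>) = slocc_class ds \<psi>)"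
proof -
  obtain n where n: "n = prod_list ds - 1" by blast
  have "0 \<notin> set ds" using assms(2) by auto
  then have "prod_list ds \<noteq> 0" by (simp add: prod_list_zero_iff)
  then have hn: "Suc n = prod_list ds" using n by simp
  interpret D: Dims ds n using assms hn by unfold_locales auto
  have z0: "(\<lambda>_. 0 :: complex) = (0 :: nat list \<Rightarrow> complex)" by (simp add: zero_fun_def)
  have orth_eq: "orth ds n \<psi> \<Phi> \<longleftrightarrow> (\<forall>i < n. (\<Sum>js\<in>idx ds. cnj (\<psi> js) * \<Phi> (i # js)) = 0)" for \<psi> \<Phi>
    by (simp add: orth_def ipr_def sl_def)
  define G where "G \<Phi> = (SOME \<psi>. \<psi> \<in> states ds \<and> \<psi> \<noteq> 0 \<and> orth ds n \<psi> \<Phi>)" for \<Phi>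
  define R where "R C = (SOME \<Phi>. slocc_maximal (n # ds) \<Phi> \<and> slocc_class (n # ds) \<Phi> = C)" for C
  define F where "F C = slocc_class ds (G (R C))" for C
  have Gspec: "G \<Phi> \<in> states ds \<and> G \<Phi> \<noteq> 0 \<and> orth ds n (G \<Phi>) \<Phi>" if "slocc_maximal (n # ds) \<Phi>" for \<Phi>
  proof -
    have "\<exists>\<psi>. \<psi> \<in> states ds \<and> \<psi> \<noteq> 0 \<and> orth ds n \<psi> \<Phi>"
      using D.good_orth_exists[OF D.maximal_good[OF that]] by blast
    from someI_ex[OF this] show ?thesis unfolding G_def .
  qed
  have Rspec: "slocc_maximal (n # ds) (R (slocc_class (n # ds) \<Phi>)) \<and>
      slocc_class (n # ds) (R (slocc_class (n # ds) \<Phi>)) = slocc_class (n # ds) \<Phi>"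
    if "slocc_maximal (n # ds) \<Phi>" for \<Phi>
    unfolding R_def by (rule someI[where x=\<Phi>]) (use that in blast)
  have Fval: "F (slocc_class (n # ds) \<Phi>) = slocc_class ds \<psi>"
    if M: "slocc_maximal (n # ds) \<Phi>" and psi: "\<psi> \<in> states ds" "\<psi> \<noteq> 0" "orth ds n \<psi> \<Phi>" for \<Phi> \<psi>
  proof -
    define \<Phi>0 where "\<Phi>0 = R (slocc_class (n # ds) \<Phi>)"
    have M0: "slocc_maximal (n # ds) \<Phi>0" and c0: "slocc_class (n # ds) \<Phi>0 = slocc_class (n # ds) \<Phi>"
      using Rspec[OF M] \<Phi>0_def by auto
    have e0: "slocc_equiv (n # ds) \<Phi>0 \<Phi>"
      using class_eq[of \<Phi>0 "n # ds" \<Phi>] c0 M0 M by (simp add: slocc_maximal_def)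
    have g0: "G \<Phi>0 \<in> states ds" "G \<Phi>0 \<noteq> 0" "orth ds n (G \<Phi>0) \<Phi>0" using Gspec[OF M0] by auto
    have "slocc_equiv ds (G \<Phi>0) \<psi>" using D.key[OF M0 M g0 psi] e0 by blast
    then have "slocc_class ds (G \<Phi>0) = slocc_class ds \<psi>" using class_eq[OF g0(1) psi(1)] by simp
    then show ?thesis unfolding F_def \<Phi>0_def by simp
  qed
  have bij: "bij_betw F (slocc_class (n # ds) ` {\<Phi>. slocc_maximal (n # ds) \<Phi>}) (slocc_class ds ` (states ds - {0}))"
    unfolding bij_betw_def
  proof (intro conjI)
    show "inj_on F (slocc_class (n # ds) ` {\<Phi>. slocc_maximal (n # ds) \<Phi>})"
    proof (rule inj_onI)
      fix C1 C2 assume C1: "C1 \<in> slocc_class (n # ds) ` {\<Phi>. slocc_maximal (n # ds) \<Phi>}"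
        and C2: "C2 \<in> slocc_class (n # ds) ` {\<Phi>. slocc_maximal (n # ds) \<Phi>}" and eq: "F C1 = F C2"
      obtain \<Phi>1 where P1: "slocc_maximal (n # ds) \<Phi>1" "C1 = slocc_class (n # ds) \<Phi>1" using C1 by blast
      obtain \<Phi>2 where P2: "slocc_maximal (n # ds) \<Phi>2" "C2 = slocc_class (n # ds) \<Phi>2" using C2 by blast
      have g1: "G \<Phi>1 \<in> states ds" "G \<Phi>1 \<noteq> 0" "orth ds n (G \<Phi>1) \<Phi>1" using Gspec[OF P1(1)] by auto
      have g2: "G \<Phi>2 \<in> states ds" "G \<Phi>2 \<noteq> 0" "orth ds n (G \<Phi>2) \<Phi>2" using Gspec[OF P2(1)] by auto
      have "slocc_class ds (G \<Phi>1) = slocc_class ds (G \<Phi>2)"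
        using eq Fval[OF P1(1) g1] Fval[OF P2(1) g2] P1(2) P2(2) by simp
      then have "slocc_equiv ds (G \<Phi>1) (G \<Phi>2)" using class_eq[OF g1(1) g2(1)] by simp
      then have "slocc_equiv (n # ds) \<Phi>1 \<Phi>2" using D.key[OF P1(1) P2(1) g1 g2] by blast
      then show "C1 = C2" using class_eq[of \<Phi>1 "n # ds" \<Phi>2] P1 P2 by (simp add: slocc_maximal_def)
    qed
    show "F ` slocc_class (n # ds) ` {\<Phi>. slocc_maximal (n # ds) \<Phi>} = slocc_class ds ` (states ds - {0})"
    proof (rule set_eqI, rule iffI)
      fix C assume "C \<in> F ` slocc_class (n # ds) ` {\<Phi>. slocc_maximal (n # ds) \<Phi>}"
      then obtain \<Phi> where P: "slocc_maximal (n # ds) \<Phi>" "C = F (slocc_class (n # ds) \<Phi>)" by blast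
      have g: "G \<Phi> \<in> states ds" "G \<Phi> \<noteq> 0" "orth ds n (G \<Phi>) \<Phi>" using Gspec[OF P(1)] by auto
      have "C = slocc_class ds (G \<Phi>)" using P(2) Fval[OF P(1) g] by simp
      then show "C \<in> slocc_class ds ` (states ds - {0})" using g by blast
    next
      fix C assume "C \<in> slocc_class ds ` (states ds - {0})"
      then obtain \<psi> where psi: "\<psi> \<in> states ds" "\<psi> \<noteq> 0" "C = slocc_class ds \<psi>" by blast
      obtain \<Phi> where P: "slocc_maximal (n # ds) \<Phi>" "orth ds n \<psi> \<Phi>" using D.surj_exists[OF psi(1,2)] by blast
      have "F (slocc_class (n # ds) \<Phi>) = C" using Fval[OF P(1) psi(1,2) P(2)] psi(3) by simp
      then show "C \<in> F ` slocc_class (n # ds) ` {\<Phi>. slocc_maximal (n # ds) \<Phi>}" using P(1) by blast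
    qed
  qed
  have val: "\<forall>\<Phi> \<psi>. slocc_maximal (n # ds) \<Phi> \<longrightarrow> \<psi> \<in> states ds \<longrightarrow> \<psi> \<noteq> 0 \<longrightarrow>
               (\<forall>i < n. (\<Sum>js\<in>idx ds. cnj (\<psi> js) * \<Phi> (i # js)) = 0) \<longrightarrow>
               F (slocc_class (n # ds) \<Phi>) = slocc_class ds \<psi>"
  proof (intro allI impI)
    fix \<Phi> \<psi> assume M: "slocc_maximal (n # ds) \<Phi>" and ps: "\<psi> \<in> states ds" and nz: "\<psi> \<noteq> 0"
      and o: "\<forall>i < n. (\<Sum>js\<in>idx ds. cnj (\<psi> js) * \<Phi> (i # js)) = 0"
    have "orth ds n \<psi> \<Phi>" using o orth_eq by simp
    then show "F (slocc_class (n # ds) \<Phi>) = slocc_class ds \<psi>" by (rule Fval[OF M ps nz])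
  qed
  show ?thesis unfolding n[symmetric] z0 by (intro exI[of _ F] conjI bij val)
qed

end
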